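(* Let $k\ge1$ be an integer and let $\mathbf{x}\in A^{\mathbb{N}}$ be a sequence such that its length-$k$ sliding-block code $B_k(\mathbf{x})$ is automatic in some regular numeration system $\mathcal{N}_k$. If the Parikh vectors of the length-$n$ prefixes of $B_k(\mathbf{x})$ form an $\mathcal{N}_k$-synchronized sequence, then $(\rho^k_{\mathbf{x}}(n))_{n\ge0}$ is $\mathcal{N}_k$-regular.
   Context: $u\sim_k v$ if $|u|_w=|v|_w$ for all words $w$ of length at most $k$; $\rho^k_{\mathbf{x}}(n)$ is the number of $\sim_k$-classes of length-$n$ factors of $\mathbf{x}$. $B_k(\mathbf{x})$: the sequence whose $i$-th letter codes (injectively) the factor $x_i\cdots x_{i+k-1}$ of $\mathbf{x}=x_0x_1\cdots$, over an alphabet in bijection with the length-$k$ factors of $\mathbf{x}$. An abstract numeration system with zeros $\mathcal{N}=(L,D,<,0)$: $D$ finite totally ordered with least digit $0$, $L\subseteq D^*$ infinite, containing the empty word, $w\in L\Leftrightarrow 0w\in L$; $\mathrm{rep}(n)$ is the $n$-th word of $L\setminus0^+L$ in radix order; $\mathrm{val}$ gives $n$ to all words of $0^*\mathrm{rep}(n)$. It is regular if $L$ and the addition relation $\{\langle x,y,z\rangle:\mathrm{val}(x)+\mathrm{val}(y)=\mathrm{val}(z)\}$ (words read synchronously, same length) are regular languages. A sequence is automatic if a DFA with output outputs its $n$-th term on valid representations of $n$. $s\colon\mathbb{N}\to\mathbb{N}^m$ is synchronized if $\{\langle x,y_1,\dots,y_m\rangle: s(\mathrm{val}(x))=(\mathrm{val}(y_1),\dots,\mathrm{val}(y_m))\}$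 is regular. A sequence $f$ is regular if $f(n)=\lambda\mu(\mathrm{rep}(n))\gamma$ for a row vector $\lambda$, column vector $\gamma$ and matrix-valued morphism $\mu$. *)

theory Defs
  imports Main
begin

definition regular_lang :: "'b list set \<Rightarrow> bool" where
  "regular_lang Lg \<longleftrightarrow>
     (\<exists>(Q::nat set) q0 (\<delta>::nat \<Rightarrow> 'b \<Rightarrow> nat) F.
        finite Q \<and> q0 \<in> Q \<and> (\<forall>q\<in>Q. \<forall>a. \<delta> q a \<in> Q) \<and> F \<subseteq> Q \<and>
        Lg = {w. foldl \<delta> q0 w \<in> F})"

text \<open>Digits are natural numbers with their usual order; the digit 0 is the least digit.\<close>

definition radix_less :: "nat list \<Rightarrow> nat list \<Rightarrow> bool" where
  "radix_less u v \<longleftrightarrow> length u < length v \<or>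
     (length u = length v \<and> (u, v) \<in> lexord {(a, b). a < b})"

definition valid_words :: "nat list set \<Rightarrow> nat list set" where
  "valid_words L = {w \<in> L. w = [] \<or> hd w \<noteq> 0}"

definition ans :: "nat list set \<Rightarrow> nat set \<Rightarrow> bool" where
  "ans L D \<longleftrightarrow> finite D \<and> 0 \<in> D \<and> L \<subseteq> lists D \<and> infinite L \<and> [] \<in> L \<and>
     (\<forall>w. w \<in> L \<longleftrightarrow> 0 # w \<in> L) \<and> infinite (valid_words L)"

definition rep :: "nat list set \<Rightarrow> nat \<Rightarrow> nat list" where
  "rep L n = (THE w. w \<in> valid_words L \<and> card {v \<in> valid_words L. radix_less v w} = n)"

definition val :: "nat list set \<Rightarrow> nat list \<Rightarrow> nat" where
  "val L w = (THE n. \<exists>j. w = replicate j 0 @ rep L n)"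

definition add_rel :: "nat list set \<Rightarrow> (nat \<times> nat \<times> nat) list set" where
  "add_rel L = {zip x (zip y z) | x y z. x \<in> L \<and> y \<in> L \<and> z \<in> L \<and>
      length x = length y \<and> length y = length z \<and> val L x + val L y = val L z}"

definition regular_ns :: "nat list set \<Rightarrow> nat set \<Rightarrow> bool" where
  "regular_ns L D \<longleftrightarrow> ans L D \<and> regular_lang L \<and> regular_lang (add_rel L)"

definition automatic :: "nat list set \<Rightarrow> (nat \<Rightarrow> 'c) \<Rightarrow> bool" where
  "automatic L f \<longleftrightarrow>
     (\<exists>(Q::nat set) q0 (\<delta>::nat \<Rightarrow> nat \<Rightarrow> nat) (\<tau>::nat \<Rightarrow> 'c).
        finite Q \<and> q0 \<in> Q \<and> (\<forall>q\<in>Q. \<forall>a. \<delta> q a \<in> Q) \<and>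
        (\<forall>w\<in>L. f (val L w) = \<tau> (foldl \<delta> q0 w)))"

definition conv :: "nat list \<Rightarrow> nat list list \<Rightarrow> (nat \<times> nat list) list" where
  "conv x ys = map (\<lambda>i. (x ! i, map (\<lambda>y. y ! i) ys)) [0..<length x]"

definition synchronized :: "nat list set \<Rightarrow> nat \<Rightarrow> (nat \<Rightarrow> nat list) \<Rightarrow> bool" where
  "synchronized L m s \<longleftrightarrow> (\<forall>n. length (s n) = m) \<and>
     regular_lang {conv x ys | x ys. x \<in> L \<and> length ys = m \<and>
        (\<forall>y\<in>set ys. y \<in> L \<and> length y = length x) \<and>
        s (val L x) = map (val L) ys}"

definition mmul :: "nat \<Rightarrow> (nat \<Rightarrow> nat \<Rightarrow> int) \<Rightarrow> (nat \<Rightarrow> nat \<Rightarrow> int) \<Rightarrow> (nat \<Rightarrow> nat \<Rightarrow> int)" where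
  "mmul r A B = (\<lambda>i j. \<Sum>l<r. A i l * B l j)"

definition mword :: "nat \<Rightarrow> (nat \<Rightarrow> nat \<Rightarrow> nat \<Rightarrow> int) \<Rightarrow> nat list \<Rightarrow> (nat \<Rightarrow> nat \<Rightarrow> int)" where
  "mword r \<mu> w = foldr (\<lambda>a M. mmul r (\<mu> a) M) w (\<lambda>i j. if i = j then 1 else 0)"

definition regular_seq :: "nat list set \<Rightarrow> (nat \<Rightarrow> nat) \<Rightarrow> bool" where
  "regular_seq L f \<longleftrightarrow>
     (\<exists>r (lv::nat \<Rightarrow> int) \<mu> (\<gamma>::nat \<Rightarrow> int). \<forall>n.
        int (f n) = (\<Sum>i<r. \<Sum>j<r. lv i * mword r \<mu> (rep L n) i j * \<gamma> j))"

definition occ :: "'a list \<Rightarrow> 'a list \<Rightarrow> nat" where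
  "occ u w = card {i. i + length w \<le> length u \<and> take (length w) (drop i u) = w}"

definition kab_equiv :: "nat \<Rightarrow> 'a list \<Rightarrow> 'a list \<Rightarrow> bool" where
  "kab_equiv k u v \<longleftrightarrow> (\<forall>w. length w \<le> k \<longrightarrow> occ u w = occ v w)"

definition factor :: "(nat \<Rightarrow> 'a) \<Rightarrow> nat \<Rightarrow> nat \<Rightarrow> 'a list" where
  "factor x i n = map x [i..<i + n]"

definition factors :: "(nat \<Rightarrow> 'a) \<Rightarrow> nat \<Rightarrow> 'a list set" where
  "factors x n = {factor x i n | i. True}"

definition kab_complexity :: "nat \<Rightarrow> (nat \<Rightarrow> 'a) \<Rightarrow> nat \<Rightarrow> nat" where
  "kab_complexity k x n =
     card ((\<lambda>u. {v \<in> factors x n. kab_equiv k u v}) ` factors x n)"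

text \<open>Sliding block code: the i-th letter is the factor x_i ... x_{i+k-1} itself
  (an injective coding over the alphabet of length-k factors).\<close>
definition block_code :: "nat \<Rightarrow> (nat \<Rightarrow> 'a) \<Rightarrow> nat \<Rightarrow> 'a list" where
  "block_code k x i = factor x i k"

definition prefix_count :: "(nat \<Rightarrow> 'b) \<Rightarrow> 'b \<Rightarrow> nat \<Rightarrow> nat" where
  "prefix_count y b n = card {i. i < n \<and> y i = b}"

end

theory Submission imports Defs begin


lemma radix_irrefl: "\<not> radix_less w w"
  unfolding radix_less_def using lexord_irreflexive[of "{(a,b). a < (b::nat)}" w] by auto

lemma radix_trans: "radix_less u v \<Longrightarrow> radix_less v w \<Longrightarrow> radix_less u w"
  unfolding radix_less_def
  by (auto elim: lexord_trans simp: trans_def)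

lemma radix_total: "u \<noteq> v \<Longrightarrow> radix_less u v \<or> radix_less v u"
proof -
  assume "u \<noteq> v"
  have "(u,v) \<in> lexord {(a, b). a < (b::nat)} \<or> u = v \<or> (v,u) \<in> lexord {(a, b). a < (b::nat)}"
    by (rule lexord_linear) auto
  then show ?thesis using \<open>u \<noteq> v\<close> unfolding radix_less_def
    by (cases "length u" "length v" rule: linorder_cases) auto
qed

definition pos :: "nat list set \<Rightarrow> nat list \<Rightarrow> nat" where
  "pos L w = card {v \<in> valid_words L. radix_less v w}"

lemma replicate_valid_eq:
  assumes "replicate j 0 @ v = replicate j' 0 @ v'"
    and "v = [] \<or> hd v \<noteq> 0" and "v' = [] \<or> hd v' \<noteq> (0::nat)"
  shows "v = v'"
  using assms
proof (induction j arbitrary: j')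
  case 0
  then show ?case by (cases j') (auto)
next
  case (Suc j)
  then show ?case by (cases j') auto
qed

context
  fixes L :: "nat list set" and D :: "nat set"
  assumes ansL: "ans L D"
begin

lemma fin_pred: "finite {v \<in> valid_words L. radix_less v w}"
proof -
  have "{v \<in> valid_words L. radix_less v w} \<subseteq> {xs. set xs \<subseteq> D \<and> length xs \<le> length w}"
    using ansL unfolding valid_words_def radix_less_def ans_def by auto
  moreover have "finite {xs. set xs \<subseteq> D \<and> length xs \<le> length w}"
    using ansL unfolding ans_def by (intro finite_lists_length_le) auto
  ultimately show ?thesis by (rule finite_subset)
qed

lemma pos_mono: "v \<in> valid_words L \<Longrightarrow> radix_less v w \<Longrightarrow> pos L v < pos L w"
  unfolding pos_def
  apply (rule psubset_card_mono[OF fin_pred])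
  using radix_trans radix_irrefl by blast

lemma pos_inj: "inj_on (pos L) (valid_words L)"
  by (metis (no_types, lifting) inj_onI less_irrefl pos_mono radix_total)

lemma pos_surj: "\<exists>w \<in> valid_words L. pos L w = n"
proof -
  have inf: "infinite (valid_words L)" using ansL unfolding ans_def by auto
  have "infinite (pos L ` valid_words L)"
    using inf pos_inj finite_image_iff by blast
  then have "\<not> (\<forall>v\<in>pos L ` valid_words L. v \<le> n)"
    unfolding finite_nat_set_iff_bounded_le by blast
  then obtain w where w: "w \<in> valid_words L" "pos L w > n"
    by (auto simp: not_le)
  let ?P = "{v \<in> valid_words L. radix_less v w}"
  have "pos L ` ?P \<subseteq> {..<pos L w}" using pos_mono by auto
  moreover have "card (pos L ` ?P) = pos L w"
    unfolding pos_def[of L w]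
    by (rule card_image, rule inj_on_subset[OF pos_inj]) auto
  ultimately have "pos L ` ?P = {..<pos L w}"
    by (simp add: card_subset_eq)
  then have "n \<in> pos L ` ?P" using w by simp
  then obtain v where "v \<in> ?P" "pos L v = n" by blast
  then show ?thesis by blast
qed

lemma rep_props: "rep L n \<in> valid_words L \<and> pos L (rep L n) = n"
proof -
  have "\<exists>!w. w \<in> valid_words L \<and> pos L w = n"
    using pos_surj pos_inj unfolding inj_on_def by blast
  then show ?thesis unfolding rep_def pos_def[symmetric] by (rule theI')
qed

lemma rep_pos: "w \<in> valid_words L \<Longrightarrow> rep L (pos L w) = w"
  by (meson inj_on_eq_iff pos_inj rep_props)

lemma L_decomp: "w \<in> L \<Longrightarrow> \<exists>j v. w = replicate j 0 @ v \<and> v \<in> valid_words L"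
proof (induction w)
  case Nil
  then show ?case unfolding valid_words_def by (intro exI[of _ 0] exI[of _ "[]"]) auto
next
  case (Cons a w)
  show ?case
  proof (cases "a = 0")
    case True
    then have "w \<in> L" using Cons ansL unfolding ans_def by auto
    then obtain j v where "w = replicate j 0 @ v \<and> v \<in> valid_words L" using Cons by auto
    then show ?thesis using True by (intro exI[of _ "Suc j"] exI[of _ v]) auto
  next
    case False
    then show ?thesis using Cons unfolding valid_words_def
      by (intro exI[of _ 0] exI[of _ "a#w"]) auto
  qed
qed

lemma val_pad_valid: "v \<in> valid_words L \<Longrightarrow> val L (replicate j 0 @ v) = pos L v"
  unfolding val_def
proof (rule the_equality)
  assume v: "v \<in> valid_words L"
  show "\<exists>j'. replicate j 0 @ v = replicate j' 0 @ rep L (pos L v)"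
    using rep_pos[OF v] by auto
  fix n assume "\<exists>j'. replicate j 0 @ v = replicate j' 0 @ rep L n"
  then obtain j' where "replicate j 0 @ v = replicate j' 0 @ rep L n" by auto
  then have "v = rep L n"
    apply (rule replicate_valid_eq)
    using v rep_props[of n] unfolding valid_words_def by auto
  then show "n = pos L v" using rep_props by auto
qed

lemma val_rep: "val L (replicate j 0 @ rep L n) = n"
  using val_pad_valid rep_props by auto

lemma L_zeros: "w \<in> L \<Longrightarrow> replicate j 0 @ w \<in> L"
  using ansL unfolding ans_def by (induction j) auto

lemma L_zeros_iff: "replicate j 0 @ w \<in> L \<longleftrightarrow> w \<in> L"
  using ansL unfolding ans_def by (induction j) auto

lemma val_zeros: "w \<in> L \<Longrightarrow> val L (replicate j 0 @ w) = val L w"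
proof -
  assume "w \<in> L"
  then obtain j' v where "w = replicate j' 0 @ v" "v \<in> valid_words L" using L_decomp by blast
  then show ?thesis using val_pad_valid
    by (metis append_assoc replicate_add)
qed

lemma rep_in_L: "rep L n \<in> L"
  using rep_props unfolding valid_words_def by auto

lemma L_eq_rep: "w \<in> L \<Longrightarrow> \<exists>j. w = replicate j 0 @ rep L (val L w)"
proof -
  assume "w \<in> L"
  then obtain j v where "w = replicate j 0 @ v" "v \<in> valid_words L" using L_decomp by blast
  then show ?thesis using val_pad_valid rep_pos by metis
qed

lemma L_lists: "w \<in> L \<Longrightarrow> set w \<subseteq> D"
  using ansL unfolding ans_def by auto

lemma zeroD: "0 \<in> D" and finD: "finite D"
  using ansL unfolding ans_def by auto

lemma rep_inj: "rep L n = rep L m \<Longrightarrow> n = m"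
  by (metis rep_props)

lemma val_inj_len: "u \<in> L \<Longrightarrow> v \<in> L \<Longrightarrow> length u = length v \<Longrightarrow> val L u = val L v \<Longrightarrow> u = v"
proof -
  assume a: "u \<in> L" "v \<in> L" "length u = length v" "val L u = val L v"
  obtain j where j: "u = replicate j 0 @ rep L (val L u)" using L_eq_rep a by blast
  obtain j' where j': "v = replicate j' 0 @ rep L (val L v)" using L_eq_rep a by blast
  have "j = j'" using j j' a(3,4) by (metis add_right_cancel length_append length_replicate)
  then show ?thesis using j j' a(4) by metis
qed

end


lemma foldl_closed: "q \<in> Q \<Longrightarrow> \<forall>q\<in>Q. \<forall>a. \<delta> q a \<in> Q \<Longrightarrow> foldl \<delta> q w \<in> Q"
  by (induction w arbitrary: q) auto

lemma regI:
  fixes Q :: "'s set" and \<delta> :: "'s \<Rightarrow> 'b \<Rightarrow> 's"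
  assumes fin: "finite Q" and q0: "q0 \<in> Q" and cl: "\<forall>q\<in>Q. \<forall>a. \<delta> q a \<in> Q"
  shows "regular_lang {w. foldl \<delta> q0 w \<in> F}"
proof -
  obtain f :: "'s \<Rightarrow> nat" and n where f: "f ` Q = {i. i < n}" "inj_on f Q"
    using finite_imp_inj_to_nat_seg[OF fin] by blast
  define \<delta>' where "\<delta>' i a = f (\<delta> (inv_into Q f i) a)" for i a
  have step: "\<delta>' (f q) a = f (\<delta> q a)" if "q \<in> Q" for q a
    unfolding \<delta>'_def using f(2) that by simp
  have run: "foldl \<delta>' (f q) w = f (foldl \<delta> q w)" if "q \<in> Q" for q w
    using that
  proof (induction w arbitrary: q)
    case Nil then show ?case by simp
  next
    case (Cons a w)
    then show ?case using step cl by simp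
  qed
  have "{w. foldl \<delta> q0 w \<in> F} = {w. foldl \<delta>' (f q0) w \<in> f ` (F \<inter> Q)}"
  proof -
    have "foldl \<delta> q0 w \<in> F \<longleftrightarrow> foldl \<delta>' (f q0) w \<in> f ` (F \<inter> Q)" for w
    proof -
      have inQ: "foldl \<delta> q0 w \<in> Q" using foldl_closed q0 cl by metis
      show ?thesis unfolding run[OF q0]
        using inQ f(2) by (auto simp: inj_on_image_mem_iff)
    qed
    then show ?thesis by auto
  qed
  moreover have "finite (f ` Q)" "f q0 \<in> f ` Q" "\<forall>q\<in>f ` Q. \<forall>a. \<delta>' q a \<in> f ` Q"
    "f ` (F \<inter> Q) \<subseteq> f ` Q"
    using fin q0 cl step by auto
  ultimately show ?thesis unfolding regular_lang_def by blast
qed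

lemma regE:
  assumes "regular_lang Lg"
  obtains Q q0 \<delta> F where "finite (Q::nat set)" "q0 \<in> Q" "\<forall>q\<in>Q. \<forall>a. \<delta> q a \<in> Q" "F \<subseteq> Q"
    "Lg = {w. foldl \<delta> q0 w \<in> F}"
  using assms unfolding regular_lang_def by blast

lemma reg_inter:
  assumes "regular_lang L1" "regular_lang L2"
  shows "regular_lang (L1 \<inter> L2)"
proof -
  obtain Q1 q1 \<delta>1 F1 where A: "finite (Q1::nat set)" "q1 \<in> Q1" "\<forall>q\<in>Q1. \<forall>a. \<delta>1 q a \<in> Q1"
    "L1 = {w. foldl \<delta>1 q1 w \<in> F1}" using regE[OF assms(1)] by metis
  obtain Q2 q2 \<delta>2 F2 where B: "finite (Q2::nat set)" "q2 \<in> Q2" "\<forall>q\<in>Q2. \<forall>a. \<delta>2 q a \<in> Q2"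
    "L2 = {w. foldl \<delta>2 q2 w \<in> F2}" using regE[OF assms(2)] by metis
  define \<delta> where "\<delta> pq a = (\<delta>1 (fst pq) a, \<delta>2 (snd pq) a)" for pq a
  have run: "foldl \<delta> (p, q) w = (foldl \<delta>1 p w, foldl \<delta>2 q w)" for p q w
    by (induction w arbitrary: p q) (auto simp: \<delta>_def)
  have "L1 \<inter> L2 = {w. foldl \<delta> (q1, q2) w \<in> F1 \<times> F2}"
    using A(4) B(4) run by auto
  moreover have "regular_lang {w. foldl \<delta> (q1, q2) w \<in> F1 \<times> F2}"
    by (rule regI[of "Q1 \<times> Q2"]) (use A B in \<open>auto simp: \<delta>_def\<close>)
  ultimately show ?thesis by simp
qed

lemma reg_compl:
  assumes "regular_lang Lg"
  shows "regular_lang (- Lg)"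
proof -
  obtain Q q0 \<delta> F where A: "finite (Q::nat set)" "q0 \<in> Q" "\<forall>q\<in>Q. \<forall>a. \<delta> q a \<in> Q"
    "Lg = {w. foldl \<delta> q0 w \<in> F}" using regE[OF assms] by metis
  have "- Lg = {w. foldl \<delta> q0 w \<in> - F}" using A(4) by auto
  moreover have "regular_lang {w. foldl \<delta> q0 w \<in> - F}"
    by (rule regI[of Q]) (use A in auto)
  ultimately show ?thesis by simp
qed

lemma reg_diff: "regular_lang L1 \<Longrightarrow> regular_lang L2 \<Longrightarrow> regular_lang (L1 - L2)"
  using reg_inter[OF _ reg_compl] by (simp add: Diff_eq)

lemma reg_inv:
  assumes "regular_lang Lg"
  shows "regular_lang {w. map h w \<in> Lg}"
proof -
  obtain Q q0 \<delta> F where A: "finite (Q::nat set)" "q0 \<in> Q" "\<forall>q\<in>Q. \<forall>a. \<delta> q a \<in> Q"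
    "Lg = {w. foldl \<delta> q0 w \<in> F}" using regE[OF assms] by metis
  define \<delta>' where "\<delta>' q a = \<delta> q (h a)" for q a
  have run: "foldl \<delta>' q w = foldl \<delta> q (map h w)" for q w
    by (induction w arbitrary: q) (auto simp: \<delta>'_def)
  have "{w. map h w \<in> Lg} = {w. foldl \<delta>' q0 w \<in> F}" using A(4) run by auto
  moreover have "regular_lang {w. foldl \<delta>' q0 w \<in> F}"
    by (rule regI[of Q]) (use A in \<open>auto simp: \<delta>'_def\<close>)
  ultimately show ?thesis by simp
qed

lemma reg_letters: "regular_lang {w. \<forall>a\<in>set w. P a}"
proof -
  define \<delta> where "\<delta> q a = (q \<and> P a)" for q a
  have run: "foldl \<delta> q w = (q \<and> (\<forall>a\<in>set w. P a))" for q w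
    by (induction w arbitrary: q) (auto simp: \<delta>_def)
  have "{w. \<forall>a\<in>set w. P a} = {w. foldl \<delta> True w \<in> {True}}" using run by auto
  moreover have "regular_lang {w. foldl \<delta> True w \<in> {True}}"
    by (rule regI[of UNIV]) auto
  ultimately show ?thesis by simp
qed

lemma reg_empty: "regular_lang {}"
proof -
  have "regular_lang {w. foldl (\<lambda>q a. q) True w \<in> {}}" by (rule regI[of UNIV]) auto
  then show ?thesis by simp
qed



definition col :: "nat list list \<Rightarrow> nat \<Rightarrow> nat list" where
  "col W t = map (\<lambda>a. a ! t) W"

definition wf :: "nat list set \<Rightarrow> nat \<Rightarrow> nat list list \<Rightarrow> bool" where
  "wf L d W \<longleftrightarrow> (\<forall>a\<in>set W. length a = d) \<and> (\<forall>t<d. col W t \<in> L)"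

definition vals :: "nat list set \<Rightarrow> nat \<Rightarrow> nat list list \<Rightarrow> nat list" where
  "vals L d W = map (\<lambda>t. val L (col W t)) [0..<d]"

definition lang :: "nat list set \<Rightarrow> nat \<Rightarrow> (nat list \<Rightarrow> bool) \<Rightarrow> nat list list set" where
  "lang L d R = {W. wf L d W \<and> R (vals L d W)}"

definition regrel :: "nat list set \<Rightarrow> nat \<Rightarrow> (nat list \<Rightarrow> bool) \<Rightarrow> bool" where
  "regrel L d R \<longleftrightarrow> regular_lang (lang L d R)"

definition zipc :: "nat list list \<Rightarrow> nat list \<Rightarrow> nat list list" where
  "zipc V y = map (\<lambda>(a, b). a @ [b]) (zip V y)"

lemma length_vals[simp]: "length (vals L d W) = d"
  by (simp add: vals_def)

lemma nth_vals[simp]: "t < d \<Longrightarrow> vals L d W ! t = val L (col W t)"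
  by (simp add: vals_def)

lemma col_append[simp]: "col (V @ W) t = col V t @ col W t"
  by (simp add: col_def)

lemma col_replicate[simp]: "t < d \<Longrightarrow> col (replicate j (replicate d 0)) t = replicate j 0"
  by (simp add: col_def)

lemma length_col[simp]: "length (col W t) = length W"
  by (simp add: col_def)

lemma col_zipc_lt: "\<forall>a\<in>set V. length a = d \<Longrightarrow> length y = length V \<Longrightarrow> t < d \<Longrightarrow>
    col (zipc V y) t = col V t"
  unfolding col_def zipc_def
  by (auto simp: list_eq_iff_nth_eq nth_append dest: nth_mem)

lemma col_zipc_d: "\<forall>a\<in>set V. length a = d \<Longrightarrow> length y = length V \<Longrightarrow>
    col (zipc V y) d = y"
  unfolding col_def zipc_def
  by (auto simp: list_eq_iff_nth_eq nth_append dest: nth_mem)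

lemma zipc_append: "length V = length y \<Longrightarrow> zipc (V @ W) (y @ u) = zipc V y @ zipc W u"
  by (simp add: zipc_def)

context
  fixes L :: "nat list set" and D :: "nat set"
  assumes rns: "regular_ns L D"
begin

lemma ansL: "ans L D" using rns unfolding regular_ns_def by auto
lemma regL: "regular_lang L" using rns unfolding regular_ns_def by auto

lemma wf_reg: "regular_lang {W. wf L d W}"
proof -
  have "regular_lang {W. (\<forall>a\<in>set W. length a = d) \<and> (\<forall>t<m. col W t \<in> L)}" for m
  proof (induction m)
    case 0
    then show ?case using reg_letters[of "\<lambda>a. length a = d"] by simp
  next
    case (Suc m)
    have "{W. (\<forall>a\<in>set W. length a = d) \<and> (\<forall>t<Suc m. col W t \<in> L)} =
      {W. (\<forall>a\<in>set W. length a = d) \<and> (\<forall>t<m. col W t \<in> L)} \<inter> {W. map (\<lambda>a. a ! m) W \<in> L}"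
      by (auto simp: col_def less_Suc_eq)
    then show ?case using reg_inter[OF Suc reg_inv[OF regL]] by simp
  qed
  then show ?thesis unfolding wf_def .
qed

lemma reg_conj: "regrel L d R1 \<Longrightarrow> regrel L d R2 \<Longrightarrow> regrel L d (\<lambda>ns. R1 ns \<and> R2 ns)"
proof -
  assume "regrel L d R1" "regrel L d R2"
  moreover have "lang L d (\<lambda>ns. R1 ns \<and> R2 ns) = lang L d R1 \<inter> lang L d R2"
    unfolding lang_def by auto
  ultimately show ?thesis unfolding regrel_def using reg_inter by simp
qed

lemma reg_not: "regrel L d R \<Longrightarrow> regrel L d (\<lambda>ns. \<not> R ns)"
proof -
  assume "regrel L d R"
  moreover have "lang L d (\<lambda>ns. \<not> R ns) = {W. wf L d W} - lang L d R"
    unfolding lang_def by auto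
  ultimately show ?thesis unfolding regrel_def using reg_diff[OF wf_reg] by simp
qed

lemma reg_disj: "regrel L d R1 \<Longrightarrow> regrel L d R2 \<Longrightarrow> regrel L d (\<lambda>ns. R1 ns \<or> R2 ns)"
proof -
  assume "regrel L d R1" "regrel L d R2"
  then have "regrel L d (\<lambda>ns. \<not> (\<not> R1 ns \<and> \<not> R2 ns))"
    by (intro reg_not reg_conj)
  then show ?thesis by simp
qed

lemma reg_perm:
  assumes "regrel L d R" "length \<sigma> = d" "\<forall>t\<in>set \<sigma>. t < d'"
  shows "regrel L d' (\<lambda>ns. R (map (\<lambda>t. ns ! t) \<sigma>))"
proof -
  define h where "h a = map (\<lambda>t. a ! t) \<sigma>" for a :: "nat list"
  have colh: "col (map h W) i = col W (\<sigma> ! i)" if "i < d" for W i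
    using that assms(2) unfolding col_def h_def by auto
  have "lang L d' (\<lambda>ns. R (map (\<lambda>t. ns ! t) \<sigma>)) = {W. wf L d' W} \<inter> {W. map h W \<in> lang L d R}"
  proof (intro set_eqI iffI)
    fix W assume W: "W \<in> lang L d' (\<lambda>ns. R (map (\<lambda>t. ns ! t) \<sigma>))"
    then have wfW: "wf L d' W" unfolding lang_def by auto
    have wfh: "wf L d (map h W)"
      using wfW assms(2,3) colh unfolding wf_def by (auto simp: h_def)
    have "vals L d (map h W) = map (\<lambda>t. vals L d' W ! t) \<sigma>"
      apply (intro nth_equalityI) using assms(2,3) colh by auto
    then show "W \<in> {W. wf L d' W} \<inter> {W. map h W \<in> lang L d R}"
      using W wfh unfolding lang_def by auto
  next
    fix W assume W: "W \<in> {W. wf L d' W} \<inter> {W. map h W \<in> lang L d R}"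
    then have "vals L d (map h W) = map (\<lambda>t. vals L d' W ! t) \<sigma>"
      apply (intro nth_equalityI) using assms(2,3) colh by auto
    then show "W \<in> lang L d' (\<lambda>ns. R (map (\<lambda>t. ns ! t) \<sigma>))"
      using W unfolding lang_def by auto
  qed
  then show ?thesis unfolding regrel_def using reg_inter[OF wf_reg reg_inv] assms(1)
    unfolding regrel_def by simp
qed

end


lemma zipc_Cons[simp]: "zipc (a # V) (b # y) = (a @ [b]) # zipc V y"
  by (simp add: zipc_def)

lemma zipc_Nil[simp]: "zipc [] y = []"
  by (simp add: zipc_def)

context
  fixes L :: "nat list set" and D :: "nat set"
  assumes rns: "regular_ns L D"
begin

lemma wf_zipc:
  assumes "\<forall>a\<in>set V. length a = d" "length y = length V"
  shows "wf L (Suc d) (zipc V y) \<longleftrightarrow> wf L d V \<and> y \<in> L"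
proof -
  have len: "\<forall>a\<in>set (zipc V y). length a = Suc d"
    using assms(1) unfolding zipc_def by (auto dest: set_zip_leftD)
  show ?thesis
    unfolding wf_def using len assms col_zipc_lt[OF assms] col_zipc_d[OF assms]
    by (auto simp: less_Suc_eq)
qed

lemma vals_zipc:
  assumes "\<forall>a\<in>set V. length a = d" "length y = length V"
  shows "vals L (Suc d) (zipc V y) = vals L d V @ [val L y]"
  apply (rule nth_equalityI)
  using col_zipc_lt[OF assms] col_zipc_d[OF assms]
  by (auto simp: nth_append less_Suc_eq)

lemma reg_ex:
  assumes "regrel L (Suc d) R"
  shows "regrel L d (\<lambda>ns. \<exists>m. R (ns @ [m]))"
proof -
  have ans: "ans L D" using ansL[OF rns] .
  obtain Q q0 \<delta> F where A: "finite (Q::nat set)" "q0 \<in> Q" "\<forall>q\<in>Q. \<forall>a. \<delta> q a \<in> Q"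
    "lang L (Suc d) R = {w. foldl \<delta> q0 w \<in> F}"
    using regE[OF assms[unfolded regrel_def]] by metis
  define Z where "Z z = zipc (replicate (length z) (replicate d 0)) z" for z
  define S0 where "S0 = {foldl \<delta> q0 (Z z) | z. set z \<subseteq> D}"
  define \<Delta> where "\<Delta> S a = {\<delta> q (a @ [b]) | q b. q \<in> S \<and> b \<in> D}" for S a
  have run: "foldl \<Delta> S W = {foldl \<delta> q (zipc W u) | q u. q \<in> S \<and> set u \<subseteq> D \<and> length u = length W}"
    for S W
  proof (induction W arbitrary: S)
    case Nil
    then show ?case by auto
  next
    case (Cons a W)
    show ?case
    proof (intro set_eqI iffI)
      fix x assume "x \<in> foldl \<Delta> S (a # W)"
      then obtain q' u where "q' \<in> \<Delta> S a" "set u \<subseteq> D" "length u = length W" "x = foldl \<delta> q' (zipc W u)"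
        using Cons by auto
      then obtain q b where "q \<in> S" "b \<in> D" "q' = \<delta> q (a @ [b])" unfolding \<Delta>_def by auto
      then show "x \<in> {foldl \<delta> q (zipc (a # W) u) | q u. q \<in> S \<and> set u \<subseteq> D \<and> length u = length (a # W)}"
        using \<open>set u \<subseteq> D\<close> \<open>length u = length W\<close> \<open>x = _\<close>
        by (intro CollectI exI[of _ q] exI[of _ "b # u"]) auto
    next
      fix x assume "x \<in> {foldl \<delta> q (zipc (a # W) u) | q u. q \<in> S \<and> set u \<subseteq> D \<and> length u = length (a # W)}"
      then obtain q u where qu: "q \<in> S" "set u \<subseteq> D" "length u = length (a # W)" "x = foldl \<delta> q (zipc (a # W) u)"
        by blast
      then obtain b u' where u: "u = b # u'" by (cases u) auto
      have "\<delta> q (a @ [b]) \<in> \<Delta> S a" using qu u unfolding \<Delta>_def by auto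
      then show "x \<in> foldl \<Delta> S (a # W)"
        using Cons qu u by auto
    qed
  qed
  have key: "(\<exists>m. R (vals L d W @ [m])) \<longleftrightarrow> foldl \<Delta> S0 W \<inter> F \<noteq> {}" if wfW: "wf L d W" for W
  proof
    assume "\<exists>m. R (vals L d W @ [m])"
    then obtain m where m: "R (vals L d W @ [m])" by blast
    define j where "j = length (rep L m)"
    define y where "y = replicate (length W) 0 @ rep L m"
    define V where "V = replicate j (replicate d 0) @ W"
    have lenV: "\<forall>a\<in>set V. length a = d" using wfW unfolding V_def wf_def by auto
    have yL: "y \<in> L" unfolding y_def using L_zeros[OF ans rep_in_L[OF ans]] .
    have valy: "val L y = m" unfolding y_def using val_rep[OF ans] by simp
    have leny: "length y = length V" unfolding y_def V_def j_def by simp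
    have wfV: "wf L d V" using wfW lenV unfolding wf_def V_def
      by (auto intro: L_zeros[OF ans])
    have valsV: "vals L d V = vals L d W"
      apply (rule nth_equalityI) using wfW unfolding V_def wf_def
      by (auto simp: val_zeros[OF ans])
    have "zipc V y \<in> lang L (Suc d) R"
      unfolding lang_def using wf_zipc[OF lenV leny] vals_zipc[OF lenV leny] wfV yL valy valsV m
      by auto
    then have inF: "foldl \<delta> q0 (zipc V y) \<in> F" using A(4) by auto
    define z where "z = take j y"
    define u where "u = drop j y"
    have yzu: "y = z @ u" "length z = j" "length u = length W"
      unfolding z_def u_def using leny unfolding V_def by auto
    have "zipc V y = Z z @ zipc W u"
      unfolding V_def Z_def using yzu by (simp add: zipc_append)
    have setD: "set z \<subseteq> D" "set u \<subseteq> D" using yzu L_lists[OF ans yL] by auto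
    have "foldl \<delta> (foldl \<delta> q0 (Z z)) (zipc W u) \<in> foldl \<Delta> S0 W"
      unfolding run S0_def using setD yzu by blast
    then show "foldl \<Delta> S0 W \<inter> F \<noteq> {}"
      using inF \<open>zipc V y = Z z @ zipc W u\<close> by auto
  next
    assume "foldl \<Delta> S0 W \<inter> F \<noteq> {}"
    then obtain z u where zu: "set z \<subseteq> D" "set u \<subseteq> D" "length u = length W"
      "foldl \<delta> (foldl \<delta> q0 (Z z)) (zipc W u) \<in> F"
      unfolding run S0_def by blast
    define V where "V = replicate (length z) (replicate d 0) @ W"
    have lenV: "\<forall>a\<in>set V. length a = d" using wfW unfolding V_def wf_def by auto
    have leny: "length (z @ u) = length V" unfolding V_def using zu by simp
    have "zipc V (z @ u) = Z z @ zipc W u"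
      unfolding V_def Z_def using zu by (simp add: zipc_append)
    then have "zipc V (z @ u) \<in> lang L (Suc d) R" using A(4) zu by simp
    then have "wf L (Suc d) (zipc V (z @ u))" "R (vals L d V @ [val L (z @ u)])"
      unfolding lang_def using vals_zipc[OF lenV leny] by auto
    moreover have "vals L d V = vals L d W"
      apply (rule nth_equalityI) using wfW unfolding V_def wf_def
      by (auto simp: val_zeros[OF ans])
    ultimately show "\<exists>m. R (vals L d W @ [m])" by auto
  qed
  have "lang L d (\<lambda>ns. \<exists>m. R (ns @ [m])) = {W. wf L d W} \<inter> {W. foldl \<Delta> S0 W \<in> {S. S \<inter> F \<noteq> {}}}"
    unfolding lang_def using key by auto
  moreover have "regular_lang {W. foldl \<Delta> S0 W \<in> {S. S \<inter> F \<noteq> {}}}"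
  proof (rule regI[of "Pow Q"])
    show "finite (Pow Q)" using A(1) by simp
    have "foldl \<delta> q0 (Z z) \<in> Q" for z using foldl_closed A(2,3) by metis
    then show "S0 \<in> Pow Q" unfolding S0_def by auto
    show "\<forall>q\<in>Pow Q. \<forall>a. \<Delta> q a \<in> Pow Q" unfolding \<Delta>_def using A(3) by auto
  qed
  ultimately show ?thesis unfolding regrel_def using reg_inter[OF wf_reg[OF rns]] by simp
qed

lemma reg_ex_many:
  assumes "regrel L (d + m) R"
  shows "regrel L d (\<lambda>ns. \<exists>ms. length ms = m \<and> R (ns @ ms))"
  using assms
proof (induction m arbitrary: R)
  case 0
  then show ?case by simp
next
  case (Suc m)
  have "regrel L (d + m) (\<lambda>ns. \<exists>x. R (ns @ [x]))"
    using reg_ex[of "d + m" R] Suc.prems by simp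
  then have "regrel L d (\<lambda>ns. \<exists>ms. length ms = m \<and> (\<exists>x. R ((ns @ ms) @ [x])))"
    using Suc.IH by blast
  moreover have "(\<exists>ms. length ms = m \<and> (\<exists>x. R ((ns @ ms) @ [x]))) \<longleftrightarrow>
      (\<exists>ms. length ms = Suc m \<and> R (ns @ ms))" for ns
  proof
    assume "\<exists>ms. length ms = m \<and> (\<exists>x. R ((ns @ ms) @ [x]))"
    then obtain ms x where "length ms = m" "R ((ns @ ms) @ [x])" by blast
    then show "\<exists>ms. length ms = Suc m \<and> R (ns @ ms)" by (intro exI[of _ "ms @ [x]"]) auto
  next
    assume "\<exists>ms. length ms = Suc m \<and> R (ns @ ms)"
    then obtain ms where ms: "length ms = Suc m" "R (ns @ ms)" by blast
    then obtain ms' x where "ms = ms' @ [x]" by (metis append_butlast_last_id length_0_conv nat.distinct(1))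
    then show "\<exists>ms. length ms = m \<and> (\<exists>x. R ((ns @ ms) @ [x]))" using ms by auto
  qed
  ultimately show ?case by simp
qed

end


context
  fixes L :: "nat list set" and D :: "nat set"
  assumes rns: "regular_ns L D"
begin

lemma reg_add: "regrel L 3 (\<lambda>ns. ns ! 0 + ns ! 1 = ns ! 2)"
proof -
  define h where "h a = (a ! 0, a ! 1, a ! 2)" for a :: "nat list"
  have "lang L 3 (\<lambda>ns. ns ! 0 + ns ! 1 = ns ! 2) = {W. wf L 3 W} \<inter> {W. map h W \<in> add_rel L}"
  proof (intro set_eqI iffI)
    fix W assume W: "W \<in> lang L 3 (\<lambda>ns. ns ! 0 + ns ! 1 = ns ! 2)"
    then have wfW: "wf L 3 W" and e: "val L (col W 0) + val L (col W 1) = val L (col W 2)"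
      unfolding lang_def by auto
    have "map h W = zip (col W 0) (zip (col W 1) (col W 2))"
      unfolding h_def col_def by (induction W) auto
    moreover have "col W 0 \<in> L" "col W 1 \<in> L" "col W 2 \<in> L" using wfW unfolding wf_def by auto
    ultimately have "map h W \<in> add_rel L" unfolding add_rel_def
      using e by (intro CollectI exI[of _ "col W 0"] exI[of _ "col W 1"] exI[of _ "col W 2"]) simp
    then show "W \<in> {W. wf L 3 W} \<inter> {W. map h W \<in> add_rel L}" using wfW by auto
  next
    fix W assume W: "W \<in> {W. wf L 3 W} \<inter> {W. map h W \<in> add_rel L}"
    then obtain x y z where xyz: "map h W = zip x (zip y z)" "length x = length y" "length y = length z"
      "val L x + val L y = val L z"
      unfolding add_rel_def by auto
    have "map fst (map h W) = x" "map (fst o snd) (map h W) = y" "map (snd o snd) (map h W) = z"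
      unfolding xyz using xyz(2,3) by (auto simp: map_fst_zip map_snd_zip simp flip: map_map)
    then have "col W 0 = x" "col W 1 = y" "col W 2 = z" unfolding h_def col_def by auto
    then show "W \<in> lang L 3 (\<lambda>ns. ns ! 0 + ns ! 1 = ns ! 2)"
      using W xyz unfolding lang_def by auto
  qed
  note eq = this
  have "regular_lang (add_rel L)" using rns unfolding regular_ns_def by simp
  from reg_inter[OF wf_reg[OF rns] reg_inv[OF this, of h]] show ?thesis
    unfolding regrel_def eq by simp
qed

lemma reg_sync:
  assumes "synchronized L c s"
  shows "regrel L (Suc c) (\<lambda>ns. s (ns ! 0) = drop 1 ns)"
proof -
  define SL where "SL = {conv x ys | x ys. x \<in> L \<and> length ys = c \<and>
        (\<forall>y\<in>set ys. y \<in> L \<and> length y = length x) \<and> s (val L x) = map (val L) ys}"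
  have regSL: "regular_lang SL" using assms unfolding synchronized_def SL_def by (rule conjunct2)
  have lens: "length (s n) = c" for n using assms unfolding synchronized_def by blast
  define h where "h a = (a ! 0, drop 1 a)" for a :: "nat list"
  have convW: "conv (col W 0) (map (\<lambda>t. col W (Suc t)) [0..<c]) = map h W"
    if "\<forall>a\<in>set W. length a = Suc c" for W
  proof (rule nth_equalityI)
    show "length (conv (col W 0) (map (\<lambda>t. col W (Suc t)) [0..<c])) = length (map h W)"
      by (simp add: conv_def)
    fix i assume i: "i < length (conv (col W 0) (map (\<lambda>t. col W (Suc t)) [0..<c]))"
    then have i': "i < length W" by (simp add: conv_def)
    then have lw: "length (W ! i) = Suc c" using that nth_mem[OF i'] by blast
    have "map (\<lambda>y. y ! i) (map (\<lambda>t. col W (Suc t)) [0..<c]) = drop 1 (W ! i)"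
    proof (rule nth_equalityI)
      show "length (map (\<lambda>y. y ! i) (map (\<lambda>t. col W (Suc t)) [0..<c])) = length (drop 1 (W ! i))"
        using lw by simp
      fix j assume "j < length (map (\<lambda>y. y ! i) (map (\<lambda>t. col W (Suc t)) [0..<c]))"
      then have j: "j < c" by simp
      show "map (\<lambda>y. y ! i) (map (\<lambda>t. col W (Suc t)) [0..<c]) ! j = drop 1 (W ! i) ! j"
        using j i' lw by (simp add: col_def)
    qed
    then show "conv (col W 0) (map (\<lambda>t. col W (Suc t)) [0..<c]) ! i = map h W ! i"
      using i' unfolding conv_def h_def by (simp add: col_def)
  qed
  have valsW: "drop 1 (vals L (Suc c) W) = map (val L) (map (\<lambda>t. col W (Suc t)) [0..<c])" for W
    by (auto simp: list_eq_iff_nth_eq)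
  have "lang L (Suc c) (\<lambda>ns. s (ns ! 0) = drop 1 ns) = {W. wf L (Suc c) W} \<inter> {W. map h W \<in> SL}"
  proof (intro set_eqI iffI)
    fix W assume W: "W \<in> lang L (Suc c) (\<lambda>ns. s (ns ! 0) = drop 1 ns)"
    then have wfW: "wf L (Suc c) W" and e: "s (val L (col W 0)) = drop 1 (vals L (Suc c) W)"
      unfolding lang_def by auto
    have "map h W \<in> SL" unfolding SL_def
      apply (rule CollectI, rule exI[of _ "col W 0"], rule exI[of _ "map (\<lambda>t. col W (Suc t)) [0..<c]"])
    proof (intro conjI)
      show "map h W = conv (col W 0) (map (\<lambda>t. col W (Suc t)) [0..<c])"
        using convW[of W] wfW unfolding wf_def by simp
      show "col W 0 \<in> L" using wfW unfolding wf_def by simp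
      show "length (map (\<lambda>t. col W (Suc t)) [0..<c]) = c" by simp
      show "\<forall>y\<in>set (map (\<lambda>t. col W (Suc t)) [0..<c]). y \<in> L \<and> length y = length (col W 0)"
        using wfW unfolding wf_def by auto
      show "s (val L (col W 0)) = map (val L) (map (\<lambda>t. col W (Suc t)) [0..<c])"
        using e valsW[of W] by simp
    qed
    then show "W \<in> {W. wf L (Suc c) W} \<inter> {W. map h W \<in> SL}" using wfW by auto
  next
    fix W assume W: "W \<in> {W. wf L (Suc c) W} \<inter> {W. map h W \<in> SL}"
    then have wfW: "wf L (Suc c) W" by auto
    then have lenW: "\<forall>a\<in>set W. length a = Suc c" unfolding wf_def by auto
    obtain x ys where xys: "map h W = conv x ys" "x \<in> L" "length ys = c"
        "\<forall>y\<in>set ys. y \<in> L \<and> length y = length x" "s (val L x) = map (val L) ys"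
      using W unfolding SL_def by blast
    have lenx: "length x = length W" using arg_cong[OF xys(1), of length] by (simp add: conv_def)
    have x: "x = col W 0"
    proof -
      have "map fst (map h W) = map fst (conv x ys)" using xys(1) by simp
      moreover have "map fst (conv x ys) = x" unfolding conv_def by (simp add: comp_def map_nth)
      moreover have "map fst (map h W) = col W 0" unfolding h_def col_def by simp
      ultimately show ?thesis by simp
    qed
    have ys: "ys = map (\<lambda>t. col W (Suc t)) [0..<c]"
    proof (rule nth_equalityI)
      show "length ys = length (map (\<lambda>t. col W (Suc t)) [0..<c])" using xys by simp
      fix t assume t: "t < length ys"
      have lt: "length (ys ! t) = length W" using xys(4) t lenx by auto
      show "ys ! t = map (\<lambda>t. col W (Suc t)) [0..<c] ! t"
      proof (rule nth_equalityI)
        show "length (ys ! t) = length (map (\<lambda>t. col W (Suc t)) [0..<c] ! t)" using lt t xys(3) by simp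
        fix i assume i: "i < length (ys ! t)"
        have "map h W ! i = conv x ys ! i" using xys(1) by simp
        then have "drop 1 (W ! i) = map (\<lambda>y. y ! i) ys" unfolding h_def conv_def using i lt lenx by simp
        then have "drop 1 (W ! i) ! t = ys ! t ! i" using t by simp
        moreover have "length (W ! i) = Suc c" using lenW i lt by auto
        moreover have "map (\<lambda>t. col W (Suc t)) [0..<c] ! t = col W (Suc t)" using t xys(3) by simp
        moreover have "col W (Suc t) ! i = W ! i ! Suc t" using i lt by (simp add: col_def)
        moreover have "drop 1 (W ! i) ! t = W ! i ! Suc t" if "length (W ! i) = Suc c"
          using that t xys(3) by simp
        ultimately show "ys ! t ! i = map (\<lambda>t. col W (Suc t)) [0..<c] ! t ! i"
          by simp
      qed
    qed
    show "W \<in> lang L (Suc c) (\<lambda>ns. s (ns ! 0) = drop 1 ns)"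
      unfolding lang_def using wfW xys(5) x ys valsW[of W] by auto
  qed
  note eq = this
  show ?thesis unfolding regrel_def eq
    by (rule reg_inter[OF wf_reg[OF rns] reg_inv[OF regSL]])
qed

lemma reg_auto:
  assumes "automatic L f"
  shows "regrel L 2 (\<lambda>ns. g (f (ns ! 0)) = g (f (ns ! 1)))"
proof -
  obtain Q q0 \<delta> \<tau> where A: "finite (Q::nat set)" "q0 \<in> Q" "\<forall>q\<in>Q. \<forall>a. \<delta> q a \<in> Q"
    "\<forall>w\<in>L. f (val L w) = \<tau> (foldl \<delta> q0 w)"
    using assms unfolding automatic_def by blast
  define \<delta>' where "\<delta>' pq a = (\<delta> (fst pq) (a ! 0), \<delta> (snd pq) (a ! (1::nat)))" for pq a
  have run: "foldl \<delta>' (p, q) W = (foldl \<delta> p (col W 0), foldl \<delta> q (col W 1))" for p q W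
    unfolding col_def by (induction W arbitrary: p q) (auto simp: \<delta>'_def)
  define F where "F = {pq. g (\<tau> (fst pq)) = g (\<tau> (snd pq))}"
  have "lang L 2 (\<lambda>ns. g (f (ns ! 0)) = g (f (ns ! 1))) = {W. wf L 2 W} \<inter> {W. foldl \<delta>' (q0, q0) W \<in> F}"
  proof -
    have "g (f (val L (col W 0))) = g (f (val L (col W 1))) \<longleftrightarrow> foldl \<delta>' (q0, q0) W \<in> F"
      if "wf L 2 W" for W
      using that A(4) run unfolding wf_def F_def by auto
    then show ?thesis unfolding lang_def by auto
  qed
  moreover have "regular_lang {W. foldl \<delta>' (q0, q0) W \<in> F}"
    by (rule regI[of "Q \<times> Q"]) (use A in \<open>auto simp: \<delta>'_def\<close>)
  ultimately show ?thesis unfolding regrel_def using reg_inter[OF wf_reg[OF rns]] by simp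
qed

end


context
  fixes L :: "nat list set" and D :: "nat set"
  assumes rns: "regular_ns L D"
begin

lemma regrel_cong:
  assumes "regrel L d R" "\<And>ns. length ns = d \<Longrightarrow> R ns = R' ns"
  shows "regrel L d R'"
proof -
  have "lang L d R = lang L d R'" unfolding lang_def using assms(2) by auto
  then show ?thesis using assms(1) unfolding regrel_def by simp
qed

lemma reg_true: "regrel L d (\<lambda>_. True)"
  unfolding regrel_def lang_def using wf_reg[OF rns] by simp

lemma reg_all_list:
  assumes "\<forall>c\<in>set cs. regrel L d (R c)"
  shows "regrel L d (\<lambda>ns. \<forall>c\<in>set cs. R c ns)"
  using assms
proof (induction cs)
  case Nil
  then show ?case using reg_true by simp
next
  case (Cons a cs)
  then have "regrel L d (\<lambda>ns. R a ns \<and> (\<forall>c\<in>set cs. R c ns))"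
    by (intro reg_conj[OF rns]) auto
  then show ?case by simp
qed

lemma reg_ex':
  assumes "regrel L (Suc d) R" "\<And>ns. length ns = d \<Longrightarrow> (\<exists>m. R (ns @ [m])) = R' ns"
  shows "regrel L d R'"
  using regrel_cong[OF reg_ex[OF rns assms(1)]] assms(2) by blast

lemma reg_imp:
  "regrel L d R1 \<Longrightarrow> regrel L d R2 \<Longrightarrow> regrel L d (\<lambda>ns. R1 ns \<longrightarrow> R2 ns)"
proof -
  assume "regrel L d R1" "regrel L d R2"
  then have "regrel L d (\<lambda>ns. \<not> R1 ns \<or> R2 ns)" by (intro reg_disj[OF rns] reg_not[OF rns])
  then show ?thesis by (rule regrel_cong) auto
qed

lemma reg_add_at:
  assumes "a < d" "b < d" "c < d"
  shows "regrel L d (\<lambda>ns. ns ! a + ns ! b = ns ! c)"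
  using reg_perm[OF rns reg_add[OF rns], of "[a, b, c]" d] assms by simp

lemma reg_le_at:
  assumes "a < d" "b < d"
  shows "regrel L d (\<lambda>ns. ns ! a \<le> ns ! b)"
proof (rule reg_ex')
  show "regrel L (Suc d) (\<lambda>zs. zs ! a + zs ! d = zs ! b)"
    using assms by (intro reg_add_at) auto
  fix ns :: "nat list" assume "length ns = d"
  then show "(\<exists>m. (ns @ [m]) ! a + (ns @ [m]) ! d = (ns @ [m]) ! b) = (ns ! a \<le> ns ! b)"
    using assms by (auto simp: nth_append le_iff_add) (metis)
qed

lemma reg_eq_at:
  assumes "a < d" "b < d"
  shows "regrel L d (\<lambda>ns. ns ! a = ns ! b)"
proof -
  have "regrel L d (\<lambda>ns. ns ! a \<le> ns ! b \<and> ns ! b \<le> ns ! a)"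
    using assms by (intro reg_conj[OF rns] reg_le_at)
  then show ?thesis by (rule regrel_cong) auto
qed

lemma reg_lt_at:
  assumes "a < d" "b < d"
  shows "regrel L d (\<lambda>ns. ns ! a < ns ! b)"
proof -
  have "regrel L d (\<lambda>ns. \<not> ns ! b \<le> ns ! a)"
    using assms by (intro reg_not[OF rns] reg_le_at)
  then show ?thesis by (rule regrel_cong) auto
qed

lemma reg_const_at:
  assumes "a < d"
  shows "regrel L d (\<lambda>ns. ns ! a = c)"
  using assms
proof (induction c arbitrary: a d)
  case 0
  have "regrel L d (\<lambda>ns. ns ! a + ns ! a = ns ! a)" using 0 by (intro reg_add_at)
  then show ?case by (rule regrel_cong) auto
next
  case (Suc c)
  have r1: "regrel L (Suc (Suc d)) (\<lambda>zs. zs ! d < zs ! Suc d \<and> zs ! Suc d < zs ! a)"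
    using Suc.prems by (intro reg_conj[OF rns] reg_lt_at) auto
  have r2: "regrel L (Suc d) (\<lambda>ys. \<exists>u. ys ! d < u \<and> u < ys ! a)"
    apply (rule reg_ex'[OF r1]) using Suc.prems by (auto simp: nth_append)
  have r3: "regrel L (Suc d) (\<lambda>ys. ys ! d = c \<and> ys ! d < ys ! a \<and> \<not> (\<exists>u. ys ! d < u \<and> u < ys ! a))"
    using Suc.prems by (intro reg_conj[OF rns] reg_not[OF rns] r2 Suc.IH reg_lt_at) auto
  show ?case
  proof (rule reg_ex'[OF r3])
    fix ns :: "nat list" assume len: "length ns = d"
    have eqv: "(\<exists>m. m = c \<and> m < y \<and> \<not> (\<exists>u. m < u \<and> u < y)) = (y = Suc c)" for y :: nat
    proof
      assume "\<exists>m. m = c \<and> m < y \<and> \<not> (\<exists>u. m < u \<and> u < y)"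
      then have h: "c < y" "\<not> (\<exists>u. c < u \<and> u < y)" by auto
      show "y = Suc c"
      proof (rule ccontr)
        assume "y \<noteq> Suc c"
        then have "Suc c < y" using h(1) Suc_lessI by blast
        then show False using h(2) by blast
      qed
    next
      assume "y = Suc c" then show "\<exists>m. m = c \<and> m < y \<and> \<not> (\<exists>u. m < u \<and> u < y)" by auto
    qed
    have "(\<exists>m. m = c \<and> m < ns ! a \<and> \<not> (\<exists>u. m < u \<and> u < ns ! a)) = (ns ! a = Suc c)"
      by (rule eqv)
    then show "(\<exists>m. (ns @ [m]) ! d = c \<and> (ns @ [m]) ! d < (ns @ [m]) ! a \<and>
        \<not> (\<exists>u. (ns @ [m]) ! d < u \<and> u < (ns @ [m]) ! a)) = (ns ! a = Suc c)"
      using len Suc.prems by (simp add: nth_append)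
  qed
qed

lemma reg_auto_at:
  assumes "automatic L f" "a < d" "b < d"
  shows "regrel L d (\<lambda>ns. g (f (ns ! a)) = g (f (ns ! b)))"
  using reg_perm[OF rns reg_auto[OF rns assms(1), of g], of "[a, b]" d] assms by simp

lemma reg_sync_at:
  assumes "synchronized L c (\<lambda>n. map (\<lambda>t. P t n) [0..<c])" "t < c" "a < d" "b < d"
  shows "regrel L d (\<lambda>ns. P t (ns ! a) = ns ! b)"
proof -
  have r0: "regrel L (Suc c) (\<lambda>ns. map (\<lambda>t. P t (ns ! 0)) [0..<c] = drop 1 ns)"
    using reg_sync[OF rns assms(1)] by simp
  have r1: "regrel L (d + c) (\<lambda>zs. map (\<lambda>t. P t (zs ! a)) [0..<c] = map (\<lambda>i. zs ! i) [d..<d + c])"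
    apply (rule regrel_cong[OF reg_perm[OF rns r0, of "a # [d..<d+c]" "d + c"]])
    using assms by (auto simp: drop_map)
  have r2: "regrel L (d + c) (\<lambda>zs. map (\<lambda>t. P t (zs ! a)) [0..<c] = map (\<lambda>i. zs ! i) [d..<d + c]
      \<and> zs ! (d + t) = zs ! b)"
    using assms by (intro reg_conj[OF rns] r1 reg_eq_at) auto
  show ?thesis
  proof (rule regrel_cong[OF reg_ex_many[OF rns r2]])
    fix ns :: "nat list" assume len: "length ns = d"
    have m: "map (\<lambda>i. (ns @ ms) ! i) [d..<d + c] = ms" if "length ms = c" for ms
      apply (rule nth_equalityI) using that len by (auto simp: nth_append)
    show "(\<exists>ms. length ms = c \<and> map (\<lambda>t. P t ((ns @ ms) ! a)) [0..<c] = map (\<lambda>i. (ns @ ms) ! i) [d..<d + c]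
      \<and> (ns @ ms) ! (d + t) = (ns @ ms) ! b) = (P t (ns ! a) = ns ! b)"
    proof
      assume "\<exists>ms. length ms = c \<and> map (\<lambda>t. P t ((ns @ ms) ! a)) [0..<c] = map (\<lambda>i. (ns @ ms) ! i) [d..<d + c]
        \<and> (ns @ ms) ! (d + t) = (ns @ ms) ! b"
      then obtain ms where ms: "length ms = c" "map (\<lambda>t. P t (ns ! a)) [0..<c] = ms" "ms ! t = ns ! b"
        using m len assms by (auto simp: nth_append)
      moreover have "map (\<lambda>t. P t (ns ! a)) [0..<c] ! t = P t (ns ! a)" using assms(2) by simp
      then have "ms ! t = P t (ns ! a)" using ms(2) by simp
      ultimately show "P t (ns ! a) = ns ! b" by simp
    next
      assume "P t (ns ! a) = ns ! b"
      then show "\<exists>ms. length ms = c \<and> map (\<lambda>t. P t ((ns @ ms) ! a)) [0..<c] = map (\<lambda>i. (ns @ ms) ! i) [d..<d + c]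
        \<and> (ns @ ms) ! (d + t) = (ns @ ms) ! b"
        using m len assms by (intro exI[of _ "map (\<lambda>t. P t (ns ! a)) [0..<c]"]) (auto simp: nth_append)
    qed
  qed
qed

end


definition EqR :: "(nat \<Rightarrow> 'x list) \<Rightarrow> (nat \<Rightarrow> nat \<Rightarrow> nat) \<Rightarrow> nat \<Rightarrow> nat \<Rightarrow> nat \<Rightarrow> nat \<Rightarrow> nat \<Rightarrow> bool" where
  "EqR B P c K n i j \<longleftrightarrow>
     (\<forall>cc\<in>set [0..<K]. n = cc \<longrightarrow> take cc (B i) = take cc (B j)) \<and>
     (K \<le> n \<longrightarrow> take K (B i) = take K (B j)) \<and>
     (\<forall>t\<in>set [0..<c]. P t (i + (n - K)) + P t j = P t (j + (n - K)) + P t i)"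

lemma len3: "length ns = 3 \<Longrightarrow> \<exists>a b c. ns = [a, b, c]"
  by (cases ns; cases "tl ns"; cases "tl (tl ns)") (auto simp: numeral_eq_Suc)

lemma len_suc: "length ms = Suc n \<Longrightarrow> \<exists>a ms'. ms = a # ms' \<and> length ms' = n"
  by (cases ms) auto

context
  fixes L :: "nat list set" and D :: "nat set"
  assumes rns: "regular_ns L D"
begin

lemma reg_Q:
  assumes sy: "synchronized L c (\<lambda>n. map (\<lambda>t. P t n) [0..<c])" and t: "t < c"
  shows "regrel L 3 (\<lambda>ns. P t (ns!1 + (ns!0 - K)) + P t (ns!2) = P t (ns!2 + (ns!0 - K)) + P t (ns!1))"
proof -
  let ?C = "\<lambda>zs::nat list. zs!4 = K \<and> ((zs!4 + zs!3 = zs!0) \<or> (zs!0 < zs!4 \<and> zs!3 = 0)) \<and>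
     zs!1 + zs!3 = zs!5 \<and> zs!2 + zs!3 = zs!6 \<and>
     P t (zs!5) = zs!7 \<and> P t (zs!2) = zs!8 \<and> P t (zs!6) = zs!9 \<and> P t (zs!1) = zs!10 \<and>
     zs!7 + zs!8 = zs!11 \<and> zs!9 + zs!10 = zs!11"
  have r: "regrel L (3 + 9) ?C"
    by (intro reg_conj[OF rns] reg_disj[OF rns] reg_const_at[OF rns] reg_add_at[OF rns]
        reg_lt_at[OF rns] reg_sync_at[OF rns sy t]) auto
  show ?thesis
  proof (rule regrel_cong[OF rns reg_ex_many[OF rns r]])
    fix ns :: "nat list" assume "length ns = 3"
    then obtain n i j where ns: "ns = [n, i, j]" using len3 by blast
    show "(\<exists>ms. length ms = 9 \<and> ?C (ns @ ms)) =
      (P t (ns!1 + (ns!0 - K)) + P t (ns!2) = P t (ns!2 + (ns!0 - K)) + P t (ns!1))"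
    proof
      assume "\<exists>ms. length ms = 9 \<and> ?C (ns @ ms)"
      then obtain ms where ms: "length ms = 9" "?C (ns @ ms)" by blast
      obtain m s a1 a2 p1 p2 p3 p4 u where mse: "ms = [m, s, a1, a2, p1, p2, p3, p4, u]"
        using ms(1) by (auto dest!: len_suc simp: numeral_eq_Suc)
      have C: "s = K" "(s + m = n) \<or> (n < s \<and> m = 0)" "i + m = a1" "j + m = a2"
        "P t a1 = p1" "P t j = p2" "P t a2 = p3" "P t i = p4" "p1 + p2 = u" "p3 + p4 = u"
        using ms(2) unfolding mse ns by (auto simp: numeral_eq_Suc)
      then have "m = n - K" by auto
      then show "P t (ns!1 + (ns!0 - K)) + P t (ns!2) = P t (ns!2 + (ns!0 - K)) + P t (ns!1)"
        using C unfolding ns by simp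
    next
      assume h: "P t (ns!1 + (ns!0 - K)) + P t (ns!2) = P t (ns!2 + (ns!0 - K)) + P t (ns!1)"
      let ?ms = "[n - K, K, i + (n - K), j + (n - K), P t (i + (n - K)), P t j, P t (j + (n - K)), P t i,
         P t (i + (n - K)) + P t j]"
      have "?C (ns @ ?ms)" using h unfolding ns by (simp add: numeral_eq_Suc) linarith
      moreover have "length ?ms = 9" by simp
      ultimately show "\<exists>ms. length ms = 9 \<and> ?C (ns @ ms)" by blast
    qed
  qed
qed

lemma reg_EqR:
  assumes au: "automatic L B" and sy: "synchronized L c (\<lambda>n. map (\<lambda>t. P t n) [0..<c])"
  shows "regrel L 3 (\<lambda>ns. EqR B P c K (ns!0) (ns!1) (ns!2))"
proof -
  have K: "regrel L 3 (\<lambda>ns. K \<le> ns!0)"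
  proof (rule reg_ex'[OF rns])
    show "regrel L (Suc 3) (\<lambda>zs. zs!3 = K \<and> zs!3 \<le> zs!0)"
      by (intro reg_conj[OF rns] reg_const_at[OF rns] reg_le_at[OF rns]) auto
    fix ns :: "nat list" assume "length ns = 3"
    then show "(\<exists>m. (ns @ [m])!3 = K \<and> (ns @ [m])!3 \<le> (ns @ [m])!0) = (K \<le> ns!0)"
      by (auto simp: nth_append)
  qed
  have "regrel L 3 (\<lambda>ns. (\<forall>cc\<in>set [0..<K]. ns!0 = cc \<longrightarrow> take cc (B (ns!1)) = take cc (B (ns!2))) \<and>
     (K \<le> ns!0 \<longrightarrow> take K (B (ns!1)) = take K (B (ns!2))) \<and>
     (\<forall>t\<in>set [0..<c]. P t (ns!1 + (ns!0 - K)) + P t (ns!2) = P t (ns!2 + (ns!0 - K)) + P t (ns!1)))"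
    apply (intro reg_conj[OF rns] reg_all_list[OF rns] reg_imp[OF rns] K ballI reg_const_at[OF rns]
        reg_auto_at[OF rns au] reg_Q[OF sy])
    by auto
  then show ?thesis unfolding EqR_def .
qed

lemma reg_first:
  assumes au: "automatic L B" and sy: "synchronized L c (\<lambda>n. map (\<lambda>t. P t n) [0..<c])"
  shows "regrel L 2 (\<lambda>ns. \<forall>j < ns!1. \<not> EqR B P c K (ns!0) (ns!1) j)"
proof -
  have "regrel L (Suc 2) (\<lambda>zs. zs!2 < zs!1 \<and> EqR B P c K (zs!0) (zs!1) (zs!2))"
    using reg_conj[OF rns reg_lt_at[OF rns] reg_EqR[OF au sy]] by simp
  then have "regrel L 2 (\<lambda>ns. \<exists>j. j < ns!1 \<and> EqR B P c K (ns!0) (ns!1) j)"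
    by (rule reg_ex'[OF rns]) (auto simp: nth_append)
  then have "regrel L 2 (\<lambda>ns. \<not> (\<exists>j. j < ns!1 \<and> EqR B P c K (ns!0) (ns!1) j))"
    by (rule reg_not[OF rns])
  then show ?thesis by (rule regrel_cong[OF rns]) auto
qed

end


lemma mword_Nil: "mword r \<mu> [] = (\<lambda>i j. if i = j then 1 else 0)"
  by (simp add: mword_def)

lemma mword_Cons: "mword r \<mu> (a # w) = mmul r (\<mu> a) (mword r \<mu> w)"
  by (simp add: mword_def)

lemma mmul_assoc: "mmul r (mmul r A B) C i j = mmul r A (\<lambda>i j. mmul r B C i j) i j"
proof -
  have "mmul r (mmul r A B) C i j = (\<Sum>m<r. \<Sum>l<r. A i l * B l m * C m j)"
    unfolding mmul_def by (simp add: sum_distrib_right)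
  also have "\<dots> = (\<Sum>l<r. \<Sum>m<r. A i l * B l m * C m j)" by (rule sum.swap)
  also have "\<dots> = mmul r A (\<lambda>i j. mmul r B C i j) i j"
    unfolding mmul_def by (simp add: sum_distrib_left mult.assoc)
  finally show ?thesis .
qed

lemma mword_append: "i < r \<Longrightarrow> mword r \<mu> (u @ v) i j = mmul r (mword r \<mu> u) (mword r \<mu> v) i j"
proof (induction u arbitrary: i j)
  case Nil
  have "mmul r (\<lambda>i j. if i = j then 1 else 0) (mword r \<mu> v) i j = (\<Sum>l<r. if i = l then mword r \<mu> v l j else 0)"
    unfolding mmul_def by (intro sum.cong) auto
  also have "\<dots> = mword r \<mu> v i j" using Nil by (simp add: sum.delta)
  finally have "mmul r (\<lambda>i j. if i = j then 1 else 0) (mword r \<mu> v) i j = mword r \<mu> v i j" .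
  then show ?case by (simp add: mword_Nil)
next
  case (Cons a u)
  have "mword r \<mu> ((a # u) @ v) i j = (\<Sum>l<r. \<mu> a i l * mword r \<mu> (u @ v) l j)"
    by (simp add: mword_Cons mmul_def)
  also have "\<dots> = (\<Sum>l<r. \<mu> a i l * mmul r (mword r \<mu> u) (mword r \<mu> v) l j)"
    using Cons.IH by (intro sum.cong) auto
  also have "\<dots> = mmul r (mword r \<mu> (a # u)) (mword r \<mu> v) i j"
    unfolding mword_Cons mmul_assoc by (simp add: mmul_def)
  finally show ?case .
qed

definition pair2 :: "nat list \<Rightarrow> nat list \<Rightarrow> nat list list" where
  "pair2 v u = map (\<lambda>(a, b). [a, b]) (zip v u)"

lemma pair2_Cons[simp]: "pair2 (a # v) (b # u) = [a, b] # pair2 v u"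
  by (simp add: pair2_def)

lemma pair2_Nil[simp]: "pair2 [] u = []"
  by (simp add: pair2_def)

lemma sum_group_card:
  fixes g :: "'b \<Rightarrow> int"
  assumes "finite D" "finite S" "\<forall>b\<in>D. h b \<in> S"
  shows "(\<Sum>b\<in>D. g (h b)) = (\<Sum>l\<in>S. int (card {b\<in>D. h b = l}) * g l)"
proof -
  have "(\<Sum>b\<in>D. g (h b)) = (\<Sum>l\<in>S. \<Sum>b\<in>{b. b \<in> D \<and> h b = l}. g (h b))"
  proof -
    have "h ` D \<subseteq> S" using assms(3) by auto
    from sum.group[OF assms(1,2) this, of "\<lambda>b. g (h b)"] show ?thesis by simp
  qed
  also have "\<dots> = (\<Sum>l\<in>S. int (card {b\<in>D. h b = l}) * g l)"
    by (intro sum.cong refl) simp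
  finally show ?thesis .
qed

lemma card_cons_split:
  assumes "finite D"
  shows "card {u. set u \<subseteq> D \<and> length u = Suc m \<and> P u} =
    (\<Sum>b\<in>D. card {u'. set u' \<subseteq> D \<and> length u' = m \<and> P (b # u')})"
proof -
  have eq: "{u. set u \<subseteq> D \<and> length u = Suc m \<and> P u} =
      (\<Union>b\<in>D. (Cons b) ` {u'. set u' \<subseteq> D \<and> length u' = m \<and> P (b # u')})"
  proof (intro set_eqI iffI)
    fix u assume "u \<in> {u. set u \<subseteq> D \<and> length u = Suc m \<and> P u}"
    then show "u \<in> (\<Union>b\<in>D. (Cons b) ` {u'. set u' \<subseteq> D \<and> length u' = m \<and> P (b # u')})"
      by (cases u) auto
  qed auto
  have fin: "finite {u'. set u' \<subseteq> D \<and> length u' = m \<and> P (b # u')}" for b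
    by (rule finite_subset[OF _ finite_lists_length_eq[OF assms, of m]]) auto
  show ?thesis unfolding eq
    by (subst card_UN_disjoint) (use assms fin in \<open>auto simp: card_image\<close>)
qed

context
  fixes Q :: "nat set" and \<delta> :: "nat \<Rightarrow> nat list \<Rightarrow> nat" and D :: "nat set" and r :: nat
  assumes finD: "finite D" and cl: "\<forall>q\<in>Q. \<forall>a. \<delta> q a \<in> Q" and Qr: "Q \<subseteq> {..<r}"
begin

definition U :: "nat \<Rightarrow> nat list \<Rightarrow> nat \<Rightarrow> nat list set" where
  "U p v q = {u. set u \<subseteq> D \<and> length u = length v \<and> foldl \<delta> p (pair2 v u) = q}"

definition mu :: "nat \<Rightarrow> nat \<Rightarrow> nat \<Rightarrow> int" where
  "mu a p q = (if p \<in> Q then int (card {b\<in>D. \<delta> p [a, b] = q}) else 0)"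

lemma mword_count: "p \<in> Q \<Longrightarrow> mword r mu v p q = int (card (U p v q))"
proof (induction v arbitrary: p)
  case Nil
  have "U p [] q = (if p = q then {[]} else {})" unfolding U_def by auto
  then show ?case by (simp add: mword_Nil)
next
  case (Cons a v)
  have "mword r mu (a # v) p q = (\<Sum>l<r. mu a p l * mword r mu v l q)"
    by (simp add: mword_Cons mmul_def)
  also have "\<dots> = (\<Sum>l<r. int (card {b\<in>D. \<delta> p [a, b] = l}) * int (card (U l v q)))"
  proof (intro sum.cong refl)
    fix l assume "l \<in> {..<r}"
    show "mu a p l * mword r mu v l q = int (card {b\<in>D. \<delta> p [a, b] = l}) * int (card (U l v q))"
    proof (cases "l \<in> Q")
      case True
      have "mword r mu v l q = int (card (U l v q))" by (rule Cons.IH[OF True])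
      moreover have "mu a p l = int (card {b\<in>D. \<delta> p [a, b] = l})" using Cons.prems by (simp add: mu_def)
      ultimately show ?thesis by simp
    next
      case False
      then have "{b\<in>D. \<delta> p [a, b] = l} = {}" using cl Cons.prems by auto
      then have c0: "card {b\<in>D. \<delta> p [a, b] = l} = 0" by (simp only: card.empty)
      have "mu a p l = 0" using Cons.prems c0 by (simp add: mu_def)
      then show ?thesis using c0 by simp
    qed
  qed
  also have "\<dots> = (\<Sum>b\<in>D. int (card (U (\<delta> p [a, b]) v q)))"
  proof -
    have "\<forall>b\<in>D. \<delta> p [a, b] \<in> {..<r}" using cl Cons.prems Qr by blast
    from sum_group_card[OF finD finite_lessThan this, of "\<lambda>l. int (card (U l v q))"] show ?thesis by simp
  qed
  also have "\<dots> = int (card (U p (a # v) q))"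
    unfolding U_def using card_cons_split[OF finD, of "length v" "\<lambda>u. foldl \<delta> p (pair2 (a # v) u) = q"]
    by simp
  finally show ?case .
qed

lemma U_finite: "finite (U p v q)"
  unfolding U_def
  by (rule finite_subset[OF _ finite_lists_length_eq[OF finD, of "length v"]]) auto

lemma count_F:
  assumes "F \<subseteq> Q" "p \<in> Q"
  shows "(\<Sum>j<r. mword r mu v p j * (if j \<in> F then 1 else 0)) =
    int (card {u. set u \<subseteq> D \<and> length u = length v \<and> foldl \<delta> p (pair2 v u) \<in> F})"
proof -
  have FQ: "F \<subseteq> {..<r}" using assms(1) Qr by (rule subset_trans)
  have fF: "finite F" using FQ finite_lessThan by (rule finite_subset)
  have "(\<Sum>j<r. mword r mu v p j * (if j \<in> F then 1 else 0)) = (\<Sum>j<r. if j \<in> F then mword r mu v p j else 0)"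
    by (intro sum.cong) auto
  also have "\<dots> = (\<Sum>j\<in>{..<r} \<inter> F. mword r mu v p j)"
    by (rule sum.inter_restrict[symmetric]) simp
  also have "{..<r} \<inter> F = F" using FQ by blast
  finally have "(\<Sum>j<r. mword r mu v p j * (if j \<in> F then 1 else 0)) = (\<Sum>j\<in>F. mword r mu v p j)" .
  also have "\<dots> = (\<Sum>j\<in>F. int (card (U p v j)))"
    using mword_count[OF assms(2)] by simp
  also have "\<dots> = int (card (\<Union>j\<in>F. U p v j))"
    by (subst card_UN_disjoint) (use fF U_finite in \<open>auto simp: U_def\<close>)
  also have "(\<Union>j\<in>F. U p v j) = {u. set u \<subseteq> D \<and> length u = length v \<and> foldl \<delta> p (pair2 v u) \<in> F}"
    unfolding U_def by auto
  finally show ?thesis .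
qed

end



definition pump :: "nat \<Rightarrow> nat \<Rightarrow> nat \<Rightarrow> 'a list \<Rightarrow> 'a list" where
  "pump t1 t2 p xs = take t1 xs @ concat (replicate p (take (t2 - t1) (drop t1 xs))) @ drop t2 xs"

lemma map_pump: "map f (pump t1 t2 p xs) = pump t1 t2 p (map f xs)"
  by (simp add: pump_def take_map drop_map map_concat)

lemma length_concat_replicate: "length (concat (replicate p ys)) = p * length ys"
  by (induction p) auto

lemma length_pump: "t1 \<le> t2 \<Longrightarrow> t2 \<le> length xs \<Longrightarrow>
    length (pump t1 t2 p xs) = t1 + p * (t2 - t1) + (length xs - t2)"
  by (simp add: pump_def length_concat_replicate)

lemma foldl_concat_replicate: "foldl \<delta> q ys = q \<Longrightarrow> foldl \<delta> q (concat (replicate p ys)) = q"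
  by (induction p) auto

lemma foldl_pump:
  assumes "t1 \<le> t2" "t2 \<le> length xs" "foldl \<delta> q (take t1 xs) = foldl \<delta> q (take t2 xs)"
  shows "foldl \<delta> q (pump t1 t2 p xs) = foldl \<delta> q xs"
proof -
  define X where "X = take t1 xs"
  define Y where "Y = take (t2 - t1) (drop t1 xs)"
  define Z where "Z = drop t2 xs"
  have t2: "take t2 xs = X @ Y" unfolding X_def Y_def using assms(1)
    by (metis le_add_diff_inverse take_add)
  have xs: "xs = X @ Y @ Z" unfolding Z_def using t2 by (metis append_assoc append_take_drop_id)
  have "foldl \<delta> (foldl \<delta> q X) Y = foldl \<delta> q X" using assms(3) t2 unfolding X_def by simp
  then have "foldl \<delta> (foldl \<delta> q X) (concat (replicate p Y)) = foldl \<delta> q X"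
    by (rule foldl_concat_replicate)
  then have "foldl \<delta> q (pump t1 t2 p xs) = foldl \<delta> (foldl \<delta> q X) Z"
    unfolding pump_def X_def[symmetric] Y_def[symmetric] Z_def[symmetric] by simp
  also have "\<dots> = foldl \<delta> q xs"
  proof -
    have "foldl \<delta> q xs = foldl \<delta> (foldl \<delta> (foldl \<delta> q X) Y) Z" using xs by (metis foldl_append)
    then show ?thesis using \<open>foldl \<delta> (foldl \<delta> q X) Y = foldl \<delta> q X\<close> by simp
  qed
  finally show ?thesis .
qed

lemma concat_replicate_zeros: "concat (replicate p (replicate m a)) = replicate (p * m) a"
  by (induction p) (auto simp: replicate_add)

lemma pump_zeros:
  assumes "t1 \<le> t2" "t2 \<le> j"
  shows "pump t1 t2 p (replicate j a @ w) = replicate (t1 + p * (t2 - t1) + (j - t2)) a @ w"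
proof -
  have "take t1 (replicate j a @ w) = replicate t1 a" using assms by simp
  moreover have "take (t2 - t1) (drop t1 (replicate j a @ w)) = replicate (t2 - t1) a" using assms by simp
  moreover have "drop t2 (replicate j a @ w) = replicate (j - t2) a @ w" using assms by simp
  ultimately show ?thesis unfolding pump_def
    by (simp add: concat_replicate_zeros replicate_add[symmetric])
qed

lemma hd_pump: "0 < t1 \<Longrightarrow> xs \<noteq> [] \<Longrightarrow> pump t1 t2 p xs \<noteq> [] \<and> hd (pump t1 t2 p xs) = hd xs"
  by (cases xs; cases t1) (auto simp: pump_def)

lemma col_pair2_0: "length u = length v \<Longrightarrow> col (pair2 v u) 0 = v"
  by (rule nth_equalityI) (auto simp: col_def pair2_def)

lemma col_pair2_1: "length u = length v \<Longrightarrow> col (pair2 v u) 1 = u"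
  by (rule nth_equalityI) (auto simp: col_def pair2_def)

lemma pair2_len: "\<forall>a\<in>set (pair2 v u). length a = 2"
  by (auto simp: pair2_def)

context
  fixes L :: "nat list set" and D :: "nat set"
  assumes rns: "regular_ns L D"
begin

lemma wf_pair2: "length u = length v \<Longrightarrow> wf L 2 (pair2 v u) \<longleftrightarrow> v \<in> L \<and> u \<in> L"
  using pair2_len[of v u] col_pair2_0[of u v] col_pair2_1[of u v]
  unfolding wf_def by (auto simp: less_Suc_eq numeral_eq_Suc)

lemma vals_pair2: "length u = length v \<Longrightarrow> vals L 2 (pair2 v u) = [val L v, val L u]"
  using col_pair2_0[of u v] col_pair2_1[of u v]
  by (simp add: vals_def numeral_eq_Suc upt_rec)

lemma wf_letters: "wf L 2 W \<Longrightarrow> W = pair2 (col W 0) (col W 1)"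
  unfolding wf_def
  by (rule nth_equalityI)
     (auto simp: pair2_def col_def list_eq_iff_nth_eq numeral_eq_Suc less_Suc_eq nth_Cons'
           dest!: nth_mem)

end


context
  fixes L :: "nat list set" and D :: "nat set"
  assumes rns: "regular_ns L D"
begin

lemma pump_bound:
  assumes lang: "lang L 2 R = {w. foldl \<delta> q0 w \<in> F}"
    and Q: "finite Q" "q0 \<in> Q" "\<forall>q\<in>Q. \<forall>a. \<delta> q a \<in> Q"
    and fin: "finite {i. R [n, i]}" and Rni: "R [n, i]"
  shows "length (rep L i) \<le> length (rep L n) + card Q"
proof (rule ccontr)
  have ans: "ans L D" using ansL[OF rns] .
  assume "\<not> ?thesis"
  then have big: "length (rep L i) > length (rep L n) + card Q" by simp
  define j0 where "j0 = length (rep L i) - length (rep L n)"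
  define v where "v = replicate j0 0 @ rep L n"
  define u where "u = rep L i"
  have lenuv: "length u = length v" unfolding u_def v_def j0_def using big by simp
  have vL: "v \<in> L" unfolding v_def using L_zeros[OF ans rep_in_L[OF ans]] .
  have uL: "u \<in> L" unfolding u_def using rep_in_L[OF ans] .
  have valv: "val L v = n" unfolding v_def using val_rep[OF ans] .
  have valu: "val L u = i" unfolding u_def using val_rep[OF ans, of 0] by simp
  define W where "W = pair2 v u"
  have "W \<in> lang L 2 R"
    unfolding lang_def W_def using wf_pair2[OF rns lenuv] vals_pair2[OF rns lenuv] vL uL valv valu Rni
    by simp
  then have WF: "foldl \<delta> q0 W \<in> F" using lang by simp
  have lenW: "length W = length v" unfolding W_def pair2_def using lenuv by simp
  define st where "st t = foldl \<delta> q0 (take t W)" for t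
  have stQ: "st ` {1..Suc (card Q)} \<subseteq> Q" unfolding st_def using foldl_closed[OF Q(2) Q(3)] by auto
  have "\<not> inj_on st {1..Suc (card Q)}"
  proof
    assume "inj_on st {1..Suc (card Q)}"
    from card_inj_on_le[OF this stQ Q(1)] show False by simp
  qed
  then obtain t1 t2 where t12: "t1 \<in> {1..Suc (card Q)}" "t2 \<in> {1..Suc (card Q)}" "t1 \<noteq> t2" "st t1 = st t2"
    unfolding inj_on_def by blast
  then obtain a b where ab: "a < b" "1 \<le> a" "b \<le> Suc (card Q)" "st a = st b"
    by (cases "t1 < t2") (auto intro: that[of t1 t2] that[of t2 t1])
  have bj0: "b \<le> j0" using ab big unfolding j0_def by simp
  have j0v: "j0 \<le> length v" unfolding v_def by simp
  define Wp where "Wp p = pump a b p W" for p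
  have lenW': "b \<le> length W" using bj0 j0v lenW by simp
  have WpF: "foldl \<delta> q0 (Wp p) \<in> F" for p
    unfolding Wp_def using foldl_pump[of a b W \<delta> q0 p] ab lenW' WF unfolding st_def by simp
  then have Wplang: "Wp p \<in> lang L 2 R" for p using lang by simp
  then have wfWp: "wf L 2 (Wp p)" and RWp: "R (vals L 2 (Wp p))" for p unfolding lang_def by auto
  have c0: "col (Wp p) 0 = pump a b p v" for p
    unfolding Wp_def col_def map_pump using col_pair2_0[OF lenuv] unfolding W_def col_def by simp
  have c1: "col (Wp p) 1 = pump a b p u" for p
    unfolding Wp_def col_def map_pump using col_pair2_1[OF lenuv] unfolding W_def col_def by simp
  have "pump a b p v = replicate (a + p * (b - a) + (j0 - b)) 0 @ rep L n" for p
    unfolding v_def using pump_zeros[of a b j0] ab bj0 by simp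
  then have val0: "val L (col (Wp p) 0) = n" for p using c0 val_rep[OF ans] by simp
  have uvalid: "u \<noteq> []" "hd u \<noteq> 0"
  proof -
    show "u \<noteq> []"
    proof
      assume "u = []"
      then show False using big unfolding u_def by simp
    qed
    then show "hd u \<noteq> 0" using rep_props[OF ans, of i] unfolding u_def valid_words_def by auto
  qed
  have pvalid: "pump a b p u \<in> valid_words L" for p
  proof -
    have "col (Wp p) 1 \<in> L" using wfWp[of p] unfolding wf_def by auto
    then have "pump a b p u \<in> L" using c1 by simp
    then show ?thesis using hd_pump[of a u b p] ab uvalid unfolding valid_words_def by auto
  qed
  have lenpu: "length (pump a b p u) = a + p * (b - a) + (length u - b)" for p
    using length_pump[of a b u p] ab bj0 j0v lenuv by simp
  define f where "f p = val L (pump a b p u)" for p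
  have Rf: "R [n, f p]" for p
  proof -
    have "vals L 2 (Wp p) = [val L (col (Wp p) 0), val L (col (Wp p) 1)]"
      by (simp add: vals_def numeral_eq_Suc upt_rec)
    then show ?thesis using RWp[of p] val0 c1 unfolding f_def by simp
  qed
  have "inj f"
  proof (rule injI)
    fix p p' assume "f p = f p'"
    then have "pos L (pump a b p u) = pos L (pump a b p' u)"
      unfolding f_def using val_pad_valid[OF ans pvalid, of 0] by simp
    then have "pump a b p u = pump a b p' u" using pos_inj[OF ans] pvalid unfolding inj_on_def by blast
    then have "length (pump a b p u) = length (pump a b p' u)" by simp
    then have "p * (b - a) = p' * (b - a)" unfolding lenpu by linarith
    then show "p = p'" using ab(1) by simp
  qed
  then have "infinite (range f)" using finite_imageD by blast
  moreover have "range f \<subseteq> {i. R [n, i]}" using Rf by auto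
  ultimately show False using fin finite_subset by blast
qed

lemma count_regular:
  assumes reg: "regrel L 2 R" and fin: "\<forall>n. finite {i. R [n, i]}"
  shows "regular_seq L (\<lambda>n. card {i. R [n, i]})"
proof -
  have ans: "ans L D" using ansL[OF rns] .
  obtain Q q0 \<delta> F where A: "finite (Q::nat set)" "q0 \<in> Q" "\<forall>q\<in>Q. \<forall>a. \<delta> q a \<in> Q" "F \<subseteq> Q"
    "lang L 2 R = {w. foldl \<delta> q0 w \<in> F}"
    using regE[OF reg[unfolded regrel_def]] by metis
  define r where "r = Suc (Max Q)"
  have Qr: "Q \<subseteq> {..<r}" unfolding r_def using A(1) by (auto simp: less_Suc_eq_le)
  have finD: "finite D" using finD[OF ans] .
  define N where "N = card Q"
  define lv where "lv i = mword r (mu Q \<delta> D) (replicate N 0) q0 i" for i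
  define \<gamma> :: "nat \<Rightarrow> int" where "\<gamma> j = (if j \<in> F then 1 else 0)" for j
  have "int (card {i. R [n, i]}) =
     (\<Sum>i<r. \<Sum>j<r. lv i * mword r (mu Q \<delta> D) (rep L n) i j * \<gamma> j)" for n
  proof -
    define v where "v = replicate N 0 @ rep L n"
    define ell where "ell = length v"
    have vL: "v \<in> L" unfolding v_def using L_zeros[OF ans rep_in_L[OF ans]] .
    have valv: "val L v = n" unfolding v_def using val_rep[OF ans] .
    have q0r: "q0 < r" using A(2) Qr by auto
    have "(\<Sum>i<r. \<Sum>j<r. lv i * mword r (mu Q \<delta> D) (rep L n) i j * \<gamma> j) =
        (\<Sum>j<r. (\<Sum>i<r. lv i * mword r (mu Q \<delta> D) (rep L n) i j) * \<gamma> j)"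
      by (subst sum.swap) (simp add: sum_distrib_right)
    also have "\<dots> = (\<Sum>j<r. mword r (mu Q \<delta> D) v q0 j * \<gamma> j)"
      unfolding v_def lv_def using mword_append[OF q0r] by (simp add: mmul_def)
    also have "\<dots> = int (card {u. set u \<subseteq> D \<and> length u = length v \<and> foldl \<delta> q0 (pair2 v u) \<in> F})"
      unfolding \<gamma>_def by (rule count_F[OF finD A(3) Qr A(4,2)])
    also have "{u. set u \<subseteq> D \<and> length u = length v \<and> foldl \<delta> q0 (pair2 v u) \<in> F} =
        {u. u \<in> L \<and> length u = ell \<and> R [n, val L u]}"
    proof -
      have "foldl \<delta> q0 (pair2 v u) \<in> F \<longleftrightarrow> u \<in> L \<and> R [n, val L u]" if "length u = length v" for u
      proof -
        have "foldl \<delta> q0 (pair2 v u) \<in> F \<longleftrightarrow> wf L 2 (pair2 v u) \<and> R (vals L 2 (pair2 v u))"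
          using A(5) unfolding lang_def by blast
        then show ?thesis using wf_pair2[OF rns that] vals_pair2[OF rns that] vL valv by simp
      qed
      then show ?thesis unfolding ell_def using L_lists[OF ans] by blast
    qed
    also have "card {u. u \<in> L \<and> length u = ell \<and> R [n, val L u]} = card {i. R [n, i]}"
    proof (rule bij_betw_same_card[of "val L"])
      show "bij_betw (val L) {u. u \<in> L \<and> length u = ell \<and> R [n, val L u]} {i. R [n, i]}"
        unfolding bij_betw_def
      proof
        show "inj_on (val L) {u. u \<in> L \<and> length u = ell \<and> R [n, val L u]}"
          using val_inj_len[OF ans] by (auto intro: inj_onI)
        show "val L ` {u. u \<in> L \<and> length u = ell \<and> R [n, val L u]} = {i. R [n, i]}"
        proof (intro set_eqI iffI)
          fix i assume "i \<in> {i. R [n, i]}"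
          then have Ri: "R [n, i]" by simp
          have "length (rep L i) \<le> ell"
            using pump_bound[OF A(5) A(1-3) fin[rule_format] Ri] unfolding ell_def v_def N_def by simp
          then have "replicate (ell - length (rep L i)) 0 @ rep L i \<in> {u. u \<in> L \<and> length u = ell \<and> R [n, val L u]}"
            using L_zeros[OF ans rep_in_L[OF ans]] val_rep[OF ans] Ri by simp
          then show "i \<in> val L ` {u. u \<in> L \<and> length u = ell \<and> R [n, val L u]}"
            using val_rep[OF ans] by (metis (no_types, lifting) image_eqI)
        qed auto
      qed
    qed
    finally show ?thesis by simp
  qed
  then show ?thesis unfolding regular_seq_def by blast
qed

end


lemma occ_split:
  assumes "finite S" "set u \<subseteq> S"
  shows "occ u w = (\<Sum>a\<in>S. occ u (a # w)) + (if take (length w) u = w then 1 else 0)"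
proof -
  define J where "J = {i. Suc i + length w \<le> length u \<and> take (length w) (drop (Suc i) u) = w}"
  define I where "I = {i. i + length w \<le> length u \<and> take (length w) (drop i u) = w}"
  have finJ: "finite J" unfolding J_def by (rule finite_subset[of _ "{..length u}"]) auto
  have Ia: "{i. i + length (a # w) \<le> length u \<and> take (length (a # w)) (drop i u) = a # w} =
      {i\<in>J. u ! i = a}" for a
  proof (intro set_eqI iffI)
    fix i assume "i \<in> {i. i + length (a # w) \<le> length u \<and> take (length (a # w)) (drop i u) = a # w}"
    then have h: "Suc i + length w \<le> length u" "take (Suc (length w)) (drop i u) = a # w" by auto
    then have "drop i u = u ! i # drop (Suc i) u" using h(1) by (simp add: Cons_nth_drop_Suc)
    then show "i \<in> {i\<in>J. u ! i = a}" using h unfolding J_def by auto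
  next
    fix i assume "i \<in> {i\<in>J. u ! i = a}"
    then have h: "Suc i + length w \<le> length u" "take (length w) (drop (Suc i) u) = w" "u ! i = a"
      unfolding J_def by auto
    have "drop i u = u ! i # drop (Suc i) u" using h(1) by (simp add: Cons_nth_drop_Suc)
    then show "i \<in> {i. i + length (a # w) \<le> length u \<and> take (length (a # w)) (drop i u) = a # w}"
      using h by auto
  qed
  have "(\<Sum>a\<in>S. occ u (a # w)) = (\<Sum>a\<in>S. card {i\<in>J. u ! i = a})"
    unfolding occ_def Ia by simp
  also have "\<dots> = card (\<Union>a\<in>S. {i\<in>J. u ! i = a})"
    by (rule card_UN_disjoint[symmetric]) (use assms finJ in auto)
  also have "(\<Union>a\<in>S. {i\<in>J. u ! i = a}) = J"
  proof (intro set_eqI iffI)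
    fix i assume "i \<in> J"
    then have "i < length u" unfolding J_def by auto
    then have "u ! i \<in> S" using assms(2) nth_mem by blast
    then show "i \<in> (\<Union>a\<in>S. {i\<in>J. u ! i = a})" using \<open>i \<in> J\<close> by blast
  qed auto
  finally have sumJ: "(\<Sum>a\<in>S. occ u (a # w)) = card J" .
  have I: "I = Suc ` J \<union> (if take (length w) u = w then {0} else {})"
  proof (intro set_eqI iffI)
    fix i assume "i \<in> I"
    then show "i \<in> Suc ` J \<union> (if take (length w) u = w then {0} else {})"
      unfolding I_def J_def by (cases i) auto
  next
    fix i assume "i \<in> Suc ` J \<union> (if take (length w) u = w then {0} else {})"
    then show "i \<in> I" unfolding I_def J_def
      by (auto split: if_splits) (metis length_take min.absorb_iff2)
  qed
  have "card I = card J + (if take (length w) u = w then 1 else 0)"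
    unfolding I using finJ by (auto simp: card_image)
  moreover have "occ u w = card I" unfolding occ_def I_def by simp
  ultimately show ?thesis using sumJ by simp
qed

lemma kab_char:
  assumes "k \<ge> 1" "length u = length v"
  shows "kab_equiv k u v \<longleftrightarrow> take (k - 1) u = take (k - 1) v \<and> (\<forall>w. length w = k \<longrightarrow> occ u w = occ v w)"
proof -
  define S where "S = set u \<union> set v"
  have S: "finite S" "set u \<subseteq> S" "set v \<subseteq> S" unfolding S_def by auto
  show ?thesis
  proof
    assume ke: "kab_equiv k u v"
    define w where "w = take (k - 1) u"
    have lw: "length w \<le> k - 1" unfolding w_def by simp
    have "occ u (a # w) = occ v (a # w)" for a
      using ke lw assms(1) unfolding kab_equiv_def by simp
    moreover have "occ u w = occ v w" using ke lw unfolding kab_equiv_def by simp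
    ultimately have "(if take (length w) u = w then 1 else 0 :: nat) = (if take (length w) v = w then 1 else 0)"
      using occ_split[OF S(1,2), of w] occ_split[OF S(1,3), of w] by simp
    moreover have "take (length w) u = w" unfolding w_def by (simp add: min_def)
    ultimately have "take (length w) v = w" by (auto split: if_splits)
    moreover have "take (length w) v = take (k - 1) v" unfolding w_def using assms(2) by (simp add: min_def)
    ultimately show "take (k - 1) u = take (k - 1) v \<and> (\<forall>w. length w = k \<longrightarrow> occ u w = occ v w)"
      using ke unfolding kab_equiv_def w_def by auto
  next
    assume h: "take (k - 1) u = take (k - 1) v \<and> (\<forall>w. length w = k \<longrightarrow> occ u w = occ v w)"
    have "occ u w = occ v w" if "length w \<le> k" for w
      using that
    proof (induction "k - length w" arbitrary: w rule: less_induct)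
      case less
      show ?case
      proof (cases "length w = k")
        case True
        then show ?thesis using h by auto
      next
        case False
        then have lt: "length w \<le> k - 1" using less.prems by simp
        have "occ u (a # w) = occ v (a # w)" for a
          using less.hyps[of "a # w"] less.prems False by simp
        moreover have "take (length w) u = take (length w) v"
        proof -
          have "take (length w) u = take (length w) (take (k - 1) u)" using lt by (simp add: min_def)
          also have "\<dots> = take (length w) (take (k - 1) v)" using h by simp
          also have "\<dots> = take (length w) v" using lt by (simp add: min_def)
          finally show ?thesis .
        qed
        ultimately show ?thesis
          using occ_split[OF S(1,2), of w] occ_split[OF S(1,3), of w] by simp
      qed
    qed
    then show "kab_equiv k u v" unfolding kab_equiv_def by auto
  qed
qed

lemma length_factor[simp]: "length (factor x i n) = n"
  by (simp add: factor_def)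

lemma take_factor: "take m (factor x i n) = factor x i (min m n)"
  by (simp add: factor_def take_map min_def)

lemma take_drop_factor: "p + m \<le> n \<Longrightarrow> take m (drop p (factor x i n)) = factor x (i + p) m"
  unfolding factor_def by (simp add: drop_map take_map add.assoc)

lemma prefix_count_add:
  "prefix_count y w (i + m) = prefix_count y w i + card {p. p < m \<and> y (i + p) = w}"
proof -
  have "{q. q < i + m \<and> y q = w} = {q. q < i \<and> y q = w} \<union> (\<lambda>p. i + p) ` {p. p < m \<and> y (i + p) = w}"
  proof (intro set_eqI iffI)
    fix q assume q: "q \<in> {q. q < i + m \<and> y q = w}"
    show "q \<in> {q. q < i \<and> y q = w} \<union> (\<lambda>p. i + p) ` {p. p < m \<and> y (i + p) = w}"
    proof (cases "q < i")
      case False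
      then have "q = i + (q - i)" by simp
      then show ?thesis using q False by (intro UnI2 image_eqI[of _ _ "q - i"]) auto
    qed (use q in auto)
  qed auto
  moreover have "card ({q. q < i \<and> y q = w} \<union> (\<lambda>p. i + p) ` {p. p < m \<and> y (i + p) = w}) =
      card {q. q < i \<and> y q = w} + card ((\<lambda>p. i + p) ` {p. p < m \<and> y (i + p) = w})"
    by (rule card_Un_disjoint) auto
  moreover have "card ((\<lambda>p. i + p) ` {p. p < m \<and> y (i + p) = w}) = card {p. p < m \<and> y (i + p) = w}"
    by (rule card_image) (auto simp: inj_on_def)
  ultimately show ?thesis unfolding prefix_count_def by simp
qed

lemma occ_factor_k:
  assumes "length w = k" "k \<ge> 1"
  shows "prefix_count (block_code k x) w (i + (n - (k - 1))) =
    prefix_count (block_code k x) w i + occ (factor x i n) w"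
proof -
  have "occ (factor x i n) w = card {p. p < n - (k - 1) \<and> block_code k x (i + p) = w}"
  proof -
    have "{p. p + length w \<le> length (factor x i n) \<and> take (length w) (drop p (factor x i n)) = w} =
        {p. p < n - (k - 1) \<and> block_code k x (i + p) = w}"
    proof (intro set_eqI iffI)
      fix p assume "p \<in> {p. p + length w \<le> length (factor x i n) \<and> take (length w) (drop p (factor x i n)) = w}"
      then have "p + k \<le> n" "take k (drop p (factor x i n)) = w" using assms by auto
      then show "p \<in> {p. p < n - (k - 1) \<and> block_code k x (i + p) = w}"
        using take_drop_factor[of p k n x i] assms(2) unfolding block_code_def by auto
    next
      fix p assume "p \<in> {p. p < n - (k - 1) \<and> block_code k x (i + p) = w}"
      then have h: "p < n - (k - 1)" "factor x (i + p) k = w" unfolding block_code_def by auto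
      have pk: "p + k \<le> n" using h(1) assms(2) by linarith
      then show "p \<in> {p. p + length w \<le> length (factor x i n) \<and> take (length w) (drop p (factor x i n)) = w}"
        using take_drop_factor[OF pk, of x i] h(2) assms(1) by simp
    qed
    then show ?thesis unfolding occ_def by simp
  qed
  then show ?thesis using prefix_count_add by simp
qed



lemma block_in_factors: "block_code k x q \<in> factors x k"
  unfolding block_code_def factors_def by auto

lemma prefix_count_zero: "w \<notin> factors x k \<Longrightarrow> prefix_count (block_code k x) w m = 0"
  unfolding prefix_count_def using block_in_factors[of k x] by (auto intro!: card_eq_0_iff[THEN iffD2])

lemma factors_len: "w \<in> factors x k \<Longrightarrow> length w = k"
  unfolding factors_def by auto

lemma EqR_iff:
  assumes k: "k \<ge> 1" and e: "bij_betw e {0..<c} (factors x k)"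
  shows "EqR (block_code k x) (\<lambda>t m. prefix_count (block_code k x) (e t) m) c (k - 1) n i j \<longleftrightarrow>
    kab_equiv k (factor x i n) (factor x j n)"
proof -
  let ?B = "block_code k x"
  let ?P = "\<lambda>t m. prefix_count (block_code k x) (e t) m"
  have tk: "take cc (?B i) = factor x i cc" if "cc \<le> k" for cc i
    unfolding block_code_def take_factor using that by (simp add: min_def)
  have p1: "((\<forall>cc\<in>set [0..<k - 1]. n = cc \<longrightarrow> take cc (?B i) = take cc (?B j)) \<and>
      (k - 1 \<le> n \<longrightarrow> take (k - 1) (?B i) = take (k - 1) (?B j))) \<longleftrightarrow>
      take (k - 1) (factor x i n) = take (k - 1) (factor x j n)"
  proof (cases "n < k - 1")
    case True
    then show ?thesis using tk[of n] tk[of "k - 1"] by (auto simp: take_factor min_def)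
  next
    case False
    then show ?thesis using tk[of "k - 1"] by (auto simp: take_factor min_def)
  qed
  have occeq: "?P t (i + (n - (k - 1))) + ?P t j = ?P t (j + (n - (k - 1))) + ?P t i \<longleftrightarrow>
      occ (factor x i n) (e t) = occ (factor x j n) (e t)" if "t < c" for t
  proof -
    have "e t \<in> factors x k" using e that unfolding bij_betw_def by auto
    then have "length (e t) = k" by (rule factors_len)
    then show ?thesis using occ_factor_k[OF _ k, of "e t" x] by simp
  qed
  have p2: "(\<forall>t\<in>set [0..<c]. ?P t (i + (n - (k - 1))) + ?P t j = ?P t (j + (n - (k - 1))) + ?P t i) \<longleftrightarrow>
      (\<forall>w. length w = k \<longrightarrow> occ (factor x i n) w = occ (factor x j n) w)"
  proof
    assume h: "\<forall>t\<in>set [0..<c]. ?P t (i + (n - (k - 1))) + ?P t j = ?P t (j + (n - (k - 1))) + ?P t i"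
    show "\<forall>w. length w = k \<longrightarrow> occ (factor x i n) w = occ (factor x j n) w"
    proof (intro allI impI)
      fix w :: "'a list" assume lw: "length w = k"
      show "occ (factor x i n) w = occ (factor x j n) w"
      proof (cases "w \<in> factors x k")
        case True
        then have "w \<in> e ` {0..<c}" using e unfolding bij_betw_def by simp
        then obtain t where "t < c" "w = e t" by auto
        then show ?thesis using h occeq by auto
      next
        case False
        then show ?thesis using occ_factor_k[OF lw k, of x] prefix_count_zero[OF False] by simp
      qed
    qed
  next
    assume h: "\<forall>w. length w = k \<longrightarrow> occ (factor x i n) w = occ (factor x j n) w"
    show "\<forall>t\<in>set [0..<c]. ?P t (i + (n - (k - 1))) + ?P t j = ?P t (j + (n - (k - 1))) + ?P t i"
    proof
      fix t assume "t \<in> set [0..<c]"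
      then have t: "t < c" by simp
      then have "e t \<in> factors x k" using e unfolding bij_betw_def by auto
      then have "length (e t) = k" by (rule factors_len)
      then show "?P t (i + (n - (k - 1))) + ?P t j = ?P t (j + (n - (k - 1))) + ?P t i"
        using occeq[OF t] h by simp
    qed
  qed
  have kc: "kab_equiv k (factor x i n) (factor x j n) \<longleftrightarrow> take (k - 1) (factor x i n) = take (k - 1) (factor x j n)
      \<and> (\<forall>w. length w = k \<longrightarrow> occ (factor x i n) w = occ (factor x j n) w)"
    by (rule kab_char[OF k]) simp
  show ?thesis unfolding EqR_def kc using p1 p2 by blast
qed

lemma kab_refl: "kab_equiv k u u" by (simp add: kab_equiv_def)
lemma kab_sym: "kab_equiv k u v \<Longrightarrow> kab_equiv k v u" by (simp add: kab_equiv_def)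
lemma kab_trans: "kab_equiv k u v \<Longrightarrow> kab_equiv k v w \<Longrightarrow> kab_equiv k u w" by (simp add: kab_equiv_def)

lemma kab_count:
  assumes "finite A" "\<forall>n. x n \<in> A"
  shows "kab_complexity k x n = card {i. \<forall>j<i. \<not> kab_equiv k (factor x i n) (factor x j n)}
    \<and> finite {i. \<forall>j<i. \<not> kab_equiv k (factor x i n) (factor x j n)}"
proof -
  let ?f = "\<lambda>i. factor x i n"
  let ?cls = "\<lambda>u. {v \<in> factors x n. kab_equiv k u v}"
  let ?G = "{i. \<forall>j<i. \<not> kab_equiv k (?f i) (?f j)}"
  have bij: "bij_betw (\<lambda>i. ?cls (?f i)) ?G (?cls ` factors x n)"
    unfolding bij_betw_def
  proof
    show "inj_on (\<lambda>i. ?cls (?f i)) ?G"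
    proof (rule inj_onI)
      fix i i' assume i: "i \<in> ?G" and i': "i' \<in> ?G" and eq: "?cls (?f i) = ?cls (?f i')"
      have "?f i \<in> ?cls (?f i)" unfolding factors_def by (auto simp: kab_refl)
      then have a: "kab_equiv k (?f i') (?f i)" using eq by auto
      show "i = i'"
      proof (rule ccontr)
        assume "i \<noteq> i'"
        then have "i < i' \<or> i' < i" by auto
        then show False using i i' a kab_sym by blast
      qed
    qed
    show "(\<lambda>i. ?cls (?f i)) ` ?G = ?cls ` factors x n"
    proof (intro set_eqI iffI)
      fix C assume "C \<in> (\<lambda>i. ?cls (?f i)) ` ?G"
      then show "C \<in> ?cls ` factors x n" unfolding factors_def by auto
    next
      fix C assume "C \<in> ?cls ` factors x n"
      then obtain i0 where C: "C = ?cls (?f i0)" unfolding factors_def by auto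
      define i where "i = (LEAST i. kab_equiv k (?f i) (?f i0))"
      have ki: "kab_equiv k (?f i) (?f i0)" unfolding i_def by (rule LeastI[of _ i0]) (rule kab_refl)
      have "i \<in> ?G"
      proof (intro CollectI allI impI notI)
        fix j assume "j < i" "kab_equiv k (?f i) (?f j)"
        then have "kab_equiv k (?f j) (?f i0)" using kab_trans[OF kab_sym ki] by blast
        then have "i \<le> j" unfolding i_def by (rule Least_le)
        then show False using \<open>j < i\<close> by simp
      qed
      moreover have "?cls (?f i) = C"
      proof -
        have "kab_equiv k (?f i) v \<longleftrightarrow> kab_equiv k (?f i0) v" for v
        proof
          assume "kab_equiv k (?f i) v" then show "kab_equiv k (?f i0) v" by (rule kab_trans[OF kab_sym[OF ki]])
        next
          assume "kab_equiv k (?f i0) v" then show "kab_equiv k (?f i) v" by (rule kab_trans[OF ki])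
        qed
        then show ?thesis unfolding C by simp
      qed
      ultimately show "C \<in> (\<lambda>i. ?cls (?f i)) ` ?G" by blast
    qed
  qed
  have "factors x n \<subseteq> {w. set w \<subseteq> A \<and> length w = n}"
    using assms(2) unfolding factors_def factor_def by auto
  then have "finite (factors x n)" by (rule finite_subset[OF _ finite_lists_length_eq[OF assms(1)]])
  then have "finite (?cls ` factors x n)" by simp
  then have "finite ?G" using bij_betw_finite[OF bij] by simp
  moreover have "card ?G = card (?cls ` factors x n)" by (rule bij_betw_same_card[OF bij])
  ultimately show ?thesis unfolding kab_complexity_def by simp
qed



theorem theorem40:
  fixes k :: nat and x :: "nat \<Rightarrow> 'a" and A :: "'a set"
    and L :: "nat list set" and D :: "nat set"
  assumes "k \<ge> 1"
    and "finite A" and "\<forall>n. x n \<in> A"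
    and "regular_ns L D"
    and "automatic L (block_code k x)"
    and "\<exists>e :: nat \<Rightarrow> 'a list.
           bij_betw e {0..<card (factors x k)} (factors x k) \<and>
           synchronized L (card (factors x k))
             (\<lambda>n. map (\<lambda>j. prefix_count (block_code k x) (e j) n) [0..<card (factors x k)])"
  shows "regular_seq L (kab_complexity k x)"
proof -
  note k = assms(1) and rns = assms(4) and au = assms(5)
  define c where "c = card (factors x k)"
  obtain e :: "nat \<Rightarrow> 'a list" where e: "bij_betw e {0..<c} (factors x k)"
    and sy: "synchronized L c (\<lambda>n. map (\<lambda>j. prefix_count (block_code k x) (e j) n) [0..<c])"
    using assms(6) unfolding c_def by blast
  define P where "P t m = prefix_count (block_code k x) (e t) m" for t m
  have sy': "synchronized L c (\<lambda>n. map (\<lambda>t. P t n) [0..<c])" using sy unfolding P_def .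
  define R where "R ns = (\<forall>j < ns!1. \<not> EqR (block_code k x) P c (k - 1) (ns!0) (ns!1) j)" for ns :: "nat list"
  have rf: "regrel L 2 R" unfolding R_def by (rule reg_first[OF rns au sy'])
  have Rn: "R [n, i] \<longleftrightarrow> (\<forall>j<i. \<not> kab_equiv k (factor x i n) (factor x j n))" for n i
    unfolding R_def P_def using EqR_iff[OF k e] by simp
  have fin: "\<forall>n. finite {i. R [n, i]}"
    using kab_count[OF assms(2,3), of k] Rn by simp
  have "regular_seq L (\<lambda>n. card {i. R [n, i]})" by (rule count_regular[OF rns rf fin])
  moreover have "(\<lambda>n. card {i. R [n, i]}) = kab_complexity k x"
    using kab_count[OF assms(2,3), of k] Rn by (simp add: fun_eq_iff)
  ultimately show ?thesis by simp
qed


end
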